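(* Let $I\subseteq F\{U\}$ and $J\subseteq F\{V\}$ be characterizable differential ideals and let $\varphi:\mathrm{quot}(F\{U\}/I)\to\mathrm{quot}(F\{V\}/J)$ be a differential birational map. Then there exists $\ell_0\in\mathbb{Z}_{\ge0}$ such that for all $\ell\in\mathbb{Z}_{\ge0}$, $\varphi\big(\mathrm{quot}(F\{U\}_{\le\ell}/I_{\le\ell})\big)\subseteq\mathrm{quot}(F\{V\}_{\le\ell+\ell_0}/J_{\le\ell+\ell_0})$, where $\mathrm{quot}(F\{U\}_{\le\ell}/I_{\le\ell})$ is regarded as a subring of $\mathrm{quot}(F\{U\}/I)$ and $\mathrm{quot}(F\{V\}_{\le k}/J_{\le k})$ as a subring of $\mathrm{quot}(F\{V\}/J)$ via the canonical (injective) maps.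
   Context: $F$ is a differential field of characteristic zero with finitely many pairwise commuting derivations $\Delta$; $F\{U\}$, $F\{V\}$ are differential polynomial rings in finitely many differential indeterminates; $F\{U\}_{\le\ell}$ is the subring of polynomials in derivatives of order at most $\ell$ and $I_{\le\ell}:=I\cap F\{U\}_{\le\ell}$ (similarly for $J$). $\mathrm{quot}(R)$ is the total quotient ring. A differential birational map from $F\{U\}/I$ to $F\{V\}/J$ is an $F$-algebra isomorphism $\mathrm{quot}(F\{U\}/I)\to\mathrm{quot}(F\{V\}/J)$ commuting with the derivations. A differential ideal is characterizable if it equals $\mathcal{I}(S)=\langle S\rangle_\Delta:(\mathrm{ini}(S)\cup\mathrm{sep}(S))^\infty$ for a differential regular chain $S$ with respect to an orderly ranking (finite, weakly triangular, coherent in Rosenfeld's sense, and for each leader $x$ the initial and separant of $S_x$ are not zero divisors modulo $\mathcal{I}(S_{<x})$). *)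

theory Defs
  imports "HOL-Library.Poly_Mapping"
begin

text \<open>The derivations Delta = {delta_0, ..., delta_(m-1)} are indexed by i < m.
  A derivative variable theta u is a pair (u, alpha) where alpha is a list of
  length m (the multi-index).\<close>

type_synonym 'u dvar = "'u \<times> nat list"
type_synonym ('f, 'u) dpoly = "('u dvar \<Rightarrow>\<^sub>0 nat) \<Rightarrow>\<^sub>0 'f"

definition dvars :: "nat \<Rightarrow> 'u dvar set" where
  "dvars m = {v. length (snd v) = m}"

definition vord :: "'u dvar \<Rightarrow> nat" where
  "vord v = sum_list (snd v)"

definition vshift :: "nat \<Rightarrow> 'u dvar \<Rightarrow> 'u dvar" where
  "vshift i v = (fst v, (snd v)[i := snd v ! i + 1])"

definition vtheta :: "nat list \<Rightarrow> 'u dvar \<Rightarrow> 'u dvar" where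
  "vtheta mu v = (fst v, map2 (+) mu (snd v))"

definition is_vderiv :: "'u dvar \<Rightarrow> 'u dvar \<Rightarrow> bool" where
  "is_vderiv w v \<longleftrightarrow> fst w = fst v \<and> list_all2 (\<le>) (snd v) (snd w)"

definition pvars :: "('f::zero, 'u) dpoly \<Rightarrow> 'u dvar set" where
  "pvars p = \<Union> (Poly_Mapping.keys ` Poly_Mapping.keys p)"

definition Var :: "'u dvar \<Rightarrow> ('f::{zero,one}, 'u) dpoly" where
  "Var v = Poly_Mapping.single (Poly_Mapping.single v 1) 1"

definition Const :: "'f::zero \<Rightarrow> ('f, 'u) dpoly" where
  "Const c = Poly_Mapping.single 0 c"

definition dring :: "nat \<Rightarrow> ('f::zero, 'u) dpoly set" where
  "dring m = {p. pvars p \<subseteq> dvars m}"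

definition dring_le :: "nat \<Rightarrow> nat \<Rightarrow> ('f::zero, 'u) dpoly set" where
  "dring_le m l = {p. pvars p \<subseteq> {v \<in> dvars m. vord v \<le> l}}"

definition pdiff :: "'u dvar \<Rightarrow> ('f::comm_ring_1, 'u) dpoly \<Rightarrow> ('f, 'u) dpoly" where
  "pdiff v p = (\<Sum>mo\<in>Poly_Mapping.keys p.
      Poly_Mapping.single (mo - Poly_Mapping.single v 1) (Poly_Mapping.lookup p mo * of_nat (Poly_Mapping.lookup mo v)))"

definition dder :: "(nat \<Rightarrow> 'f \<Rightarrow> 'f) \<Rightarrow> nat \<Rightarrow> ('f::comm_ring_1, 'u) dpoly \<Rightarrow> ('f, 'u) dpoly" where
  "dder \<delta> i p = Poly_Mapping.map (\<delta> i) p + (\<Sum>v\<in>pvars p. pdiff v p * Var (vshift i v))"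

definition dtheta :: "(nat \<Rightarrow> 'f \<Rightarrow> 'f) \<Rightarrow> nat list \<Rightarrow> ('f::comm_ring_1, 'u) dpoly \<Rightarrow> ('f, 'u) dpoly" where
  "dtheta \<delta> mu p = foldr (\<lambda>i q. (dder \<delta> i ^^ (mu ! i)) q) [0..<length mu] p"

text \<open>F is a differential field with m pairwise commuting derivations
  (characteristic zero is imposed by the type class field_char_0).\<close>
definition diff_field :: "nat \<Rightarrow> (nat \<Rightarrow> 'f::field \<Rightarrow> 'f) \<Rightarrow> bool" where
  "diff_field m \<delta> \<longleftrightarrow>
     (\<forall>i<m. \<forall>a b. \<delta> i (a + b) = \<delta> i a + \<delta> i b) \<and>
     (\<forall>i<m. \<forall>a b. \<delta> i (a * b) = a * \<delta> i b + \<delta> i a * b) \<and>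
     (\<forall>i<m. \<forall>j<m. \<forall>a. \<delta> i (\<delta> j a) = \<delta> j (\<delta> i a))"

definition is_ideal :: "'a::comm_ring_1 set \<Rightarrow> 'a set \<Rightarrow> bool" where
  "is_ideal R I \<longleftrightarrow> I \<subseteq> R \<and> 0 \<in> I \<and> (\<forall>a\<in>I. \<forall>b\<in>I. a + b \<in> I) \<and> (\<forall>a\<in>I. \<forall>r\<in>R. r * a \<in> I)"

definition ideal_gen :: "'a::comm_ring_1 set \<Rightarrow> 'a set \<Rightarrow> 'a set" where
  "ideal_gen R S = \<Inter>{I. is_ideal R I \<and> S \<subseteq> I}"

definition is_diff_ideal :: "nat \<Rightarrow> (nat \<Rightarrow> 'f \<Rightarrow> 'f) \<Rightarrow> ('f::comm_ring_1, 'u) dpoly set \<Rightarrow> bool" where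
  "is_diff_ideal m \<delta> I \<longleftrightarrow> is_ideal (dring m) I \<and> (\<forall>i<m. \<forall>p\<in>I. dder \<delta> i p \<in> I)"

definition diff_ideal_gen :: "nat \<Rightarrow> (nat \<Rightarrow> 'f \<Rightarrow> 'f) \<Rightarrow> ('f::comm_ring_1, 'u) dpoly set \<Rightarrow> ('f, 'u) dpoly set" where
  "diff_ideal_gen m \<delta> S = \<Inter>{I. is_diff_ideal m \<delta> I \<and> S \<subseteq> I}"

definition saturation :: "'a::comm_ring_1 set \<Rightarrow> 'a set \<Rightarrow> 'a set \<Rightarrow> 'a set" where
  "saturation R I H = {p \<in> R. \<exists>hs. set hs \<subseteq> H \<and> prod_list hs * p \<in> I}"

definition nzd_mod :: "'a::comm_ring_1 set \<Rightarrow> 'a set \<Rightarrow> 'a \<Rightarrow> bool" where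
  "nzd_mod R I b \<longleftrightarrow> b \<in> R \<and> (\<forall>q\<in>R. b * q \<in> I \<longrightarrow> q \<in> I)"

definition orderly_ranking :: "nat \<Rightarrow> ('u dvar \<Rightarrow> 'u dvar \<Rightarrow> bool) \<Rightarrow> bool" where
  "orderly_ranking m r \<longleftrightarrow>
     (\<forall>v\<in>dvars m. \<not> r v v) \<and>
     (\<forall>u\<in>dvars m. \<forall>v\<in>dvars m. \<forall>w\<in>dvars m. r u v \<longrightarrow> r v w \<longrightarrow> r u w) \<and>
     (\<forall>v\<in>dvars m. \<forall>w\<in>dvars m. v \<noteq> w \<longrightarrow> r v w \<or> r w v) \<and>
     (\<forall>v\<in>dvars m. \<forall>i<m. r v (vshift i v)) \<and>
     (\<forall>v\<in>dvars m. \<forall>w\<in>dvars m. \<forall>i<m. r v w \<longrightarrow> r (vshift i v) (vshift i w)) \<and>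
     (\<forall>v\<in>dvars m. \<forall>w\<in>dvars m. vord v < vord w \<longrightarrow> r v w)"

definition leader :: "('u dvar \<Rightarrow> 'u dvar \<Rightarrow> bool) \<Rightarrow> ('f::zero, 'u) dpoly \<Rightarrow> 'u dvar" where
  "leader r p = (THE v. v \<in> pvars p \<and> (\<forall>w\<in>pvars p. w \<noteq> v \<longrightarrow> r w v))"

definition vdeg :: "'u dvar \<Rightarrow> ('f::zero, 'u) dpoly \<Rightarrow> nat" where
  "vdeg v p = Max (insert 0 ((\<lambda>mo. Poly_Mapping.lookup mo v) ` Poly_Mapping.keys p))"

definition initial :: "('u dvar \<Rightarrow> 'u dvar \<Rightarrow> bool) \<Rightarrow> ('f::comm_ring_1, 'u) dpoly \<Rightarrow> ('f, 'u) dpoly" where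
  "initial r p = (let v = leader r p; d = vdeg v p in
     (\<Sum>mo\<in>{mo\<in>Poly_Mapping.keys p. Poly_Mapping.lookup mo v = d}. Poly_Mapping.single (mo - Poly_Mapping.single v d) (Poly_Mapping.lookup p mo)))"

definition separant :: "('u dvar \<Rightarrow> 'u dvar \<Rightarrow> bool) \<Rightarrow> ('f::comm_ring_1, 'u) dpoly \<Rightarrow> ('f, 'u) dpoly" where
  "separant r p = pdiff (leader r p) p"

definition HS :: "('u dvar \<Rightarrow> 'u dvar \<Rightarrow> bool) \<Rightarrow> ('f::comm_ring_1, 'u) dpoly set \<Rightarrow> ('f, 'u) dpoly set" where
  "HS r S = initial r ` S \<union> separant r ` S"

definition charI :: "nat \<Rightarrow> (nat \<Rightarrow> 'f \<Rightarrow> 'f) \<Rightarrow> ('u dvar \<Rightarrow> 'u dvar \<Rightarrow> bool)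
    \<Rightarrow> ('f::comm_ring_1, 'u) dpoly set \<Rightarrow> ('f, 'u) dpoly set" where
  "charI m \<delta> r S = saturation (dring m) (diff_ideal_gen m \<delta> S) (HS r S)"

definition weak_d_triangular :: "nat \<Rightarrow> ('u dvar \<Rightarrow> 'u dvar \<Rightarrow> bool) \<Rightarrow> ('f::zero, 'u) dpoly set \<Rightarrow> bool" where
  "weak_d_triangular m r S \<longleftrightarrow> finite S \<and> S \<subseteq> dring m \<and> (\<forall>a\<in>S. pvars a \<noteq> {}) \<and>
     (\<forall>a\<in>S. \<forall>b\<in>S. a \<noteq> b \<longrightarrow> \<not> is_vderiv (leader r a) (leader r b))"

text \<open>Rosenfeld coherence: for a, b in S whose leaders theta_a u, theta_b u have a common
  derivative theta_ab u (the least one), the Delta-polynomial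
  s_b theta_ab/theta_a a - s_a theta_ab/theta_b b lies in
  (Theta S_{< theta_ab u}) : H_S^infinity (algebraic ideal).\<close>
definition rosenfeld_coherent :: "nat \<Rightarrow> (nat \<Rightarrow> 'f \<Rightarrow> 'f) \<Rightarrow> ('u dvar \<Rightarrow> 'u dvar \<Rightarrow> bool)
    \<Rightarrow> ('f::comm_ring_1, 'u) dpoly set \<Rightarrow> bool" where
  "rosenfeld_coherent m \<delta> r S \<longleftrightarrow>
     (\<forall>a\<in>S. \<forall>b\<in>S. fst (leader r a) = fst (leader r b) \<longrightarrow>
        (let \<alpha> = snd (leader r a); \<beta> = snd (leader r b); \<gamma> = map2 max \<alpha> \<beta>;
             w = (fst (leader r a), \<gamma>);
             low = {dtheta \<delta> \<mu> c | \<mu> c. c \<in> S \<and> length \<mu> = m \<and> r (vtheta \<mu> (leader r c)) w}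
         in separant r b * dtheta \<delta> (map2 (-) \<gamma> \<alpha>) a - separant r a * dtheta \<delta> (map2 (-) \<gamma> \<beta>) b
              \<in> saturation (dring m) (ideal_gen (dring m) low) (HS r S)))"

definition diff_regular_chain :: "nat \<Rightarrow> (nat \<Rightarrow> 'f \<Rightarrow> 'f) \<Rightarrow> ('u dvar \<Rightarrow> 'u dvar \<Rightarrow> bool)
    \<Rightarrow> ('f::comm_ring_1, 'u) dpoly set \<Rightarrow> bool" where
  "diff_regular_chain m \<delta> r S \<longleftrightarrow> weak_d_triangular m r S \<and> rosenfeld_coherent m \<delta> r S \<and>
     (\<forall>a\<in>S. let x = leader r a; Sx = {b\<in>S. r (leader r b) x} in
        nzd_mod (dring m) (charI m \<delta> r Sx) (initial r a) \<and>
        nzd_mod (dring m) (charI m \<delta> r Sx) (separant r a))"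

definition characterizable :: "nat \<Rightarrow> (nat \<Rightarrow> 'f \<Rightarrow> 'f) \<Rightarrow> ('f::comm_ring_1, 'u) dpoly set \<Rightarrow> bool" where
  "characterizable m \<delta> I \<longleftrightarrow>
     (\<exists>r S. orderly_ranking m r \<and> diff_regular_chain m \<delta> r S \<and> I = charI m \<delta> r S)"

text \<open>quot(R/I): classes of fractions a/b with a in R and b not a zero divisor modulo I.\<close>
definition frac_rel :: "'a::comm_ring_1 set \<Rightarrow> 'a set \<Rightarrow> (('a \<times> 'a) \<times> ('a \<times> 'a)) set" where
  "frac_rel R I = {((a, b), (c, d)). a \<in> R \<and> c \<in> R \<and> nzd_mod R I b \<and> nzd_mod R I d \<and> a * d - c * b \<in> I}"

definition fclass :: "'a::comm_ring_1 set \<Rightarrow> 'a set \<Rightarrow> 'a \<Rightarrow> 'a \<Rightarrow> ('a \<times> 'a) set" where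
  "fclass R I a b = frac_rel R I `` {(a, b)}"

definition tquot :: "'a::comm_ring_1 set \<Rightarrow> 'a set \<Rightarrow> ('a \<times> 'a) set set" where
  "tquot R I = {fclass R I a b | a b. a \<in> R \<and> nzd_mod R I b}"

definition qadd :: "'a::comm_ring_1 set \<Rightarrow> 'a set \<Rightarrow> ('a \<times> 'a) set \<Rightarrow> ('a \<times> 'a) set \<Rightarrow> ('a \<times> 'a) set" where
  "qadd R I X Y = \<Union>{fclass R I (a * d + c * b) (b * d) | a b c d. (a, b) \<in> X \<and> (c, d) \<in> Y}"

definition qmul :: "'a::comm_ring_1 set \<Rightarrow> 'a set \<Rightarrow> ('a \<times> 'a) set \<Rightarrow> ('a \<times> 'a) set \<Rightarrow> ('a \<times> 'a) set" where
  "qmul R I X Y = \<Union>{fclass R I (a * c) (b * d) | a b c d. (a, b) \<in> X \<and> (c, d) \<in> Y}"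

definition qder :: "nat \<Rightarrow> (nat \<Rightarrow> 'f \<Rightarrow> 'f) \<Rightarrow> nat \<Rightarrow> ('f::comm_ring_1, 'u) dpoly set
    \<Rightarrow> (('f, 'u) dpoly \<times> ('f, 'u) dpoly) set \<Rightarrow> (('f, 'u) dpoly \<times> ('f, 'u) dpoly) set" where
  "qder m \<delta> i I X = \<Union>{fclass (dring m) I (dder \<delta> i a * b - a * dder \<delta> i b) (b * b) | a b. (a, b) \<in> X}"

text \<open>quot(F{U}/I) and the image of quot(F{U}_{<=l}/I_{<=l}) under the canonical map\<close>
definition dquot :: "nat \<Rightarrow> ('f::comm_ring_1, 'u) dpoly set \<Rightarrow> (('f, 'u) dpoly \<times> ('f, 'u) dpoly) set set" where
  "dquot m I = tquot (dring m) I"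

definition dquot_le :: "nat \<Rightarrow> ('f::comm_ring_1, 'u) dpoly set \<Rightarrow> nat \<Rightarrow> (('f, 'u) dpoly \<times> ('f, 'u) dpoly) set set" where
  "dquot_le m I l = {fclass (dring m) I a b | a b.
      a \<in> dring_le m l \<and> nzd_mod (dring_le m l) (I \<inter> dring_le m l) b \<and> nzd_mod (dring m) I b}"

definition diff_birational :: "nat \<Rightarrow> (nat \<Rightarrow> 'f \<Rightarrow> 'f) \<Rightarrow> ('f::comm_ring_1, 'u) dpoly set \<Rightarrow> ('f, 'v) dpoly set
    \<Rightarrow> ((('f, 'u) dpoly \<times> ('f, 'u) dpoly) set \<Rightarrow> (('f, 'v) dpoly \<times> ('f, 'v) dpoly) set) \<Rightarrow> bool" where
  "diff_birational m \<delta> I J \<phi> \<longleftrightarrow>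
     bij_betw \<phi> (dquot m I) (dquot m J) \<and>
     (\<forall>X\<in>dquot m I. \<forall>Y\<in>dquot m I. \<phi> (qadd (dring m) I X Y) = qadd (dring m) J (\<phi> X) (\<phi> Y)) \<and>
     (\<forall>X\<in>dquot m I. \<forall>Y\<in>dquot m I. \<phi> (qmul (dring m) I X Y) = qmul (dring m) J (\<phi> X) (\<phi> Y)) \<and>
     (\<forall>c. \<phi> (fclass (dring m) I (Const c) 1) = fclass (dring m) J (Const c) 1) \<and>
     (\<forall>i<m. \<forall>X\<in>dquot m I. \<phi> (qder m \<delta> i I X) = qder m \<delta> i J (\<phi> X))"

end

theory Submission
  imports Defs
begin



lemma lookup_map0: "g 0 = 0 \<Longrightarrow> Poly_Mapping.lookup (Poly_Mapping.map g p) k = g (Poly_Mapping.lookup p k)"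
  by transfer (auto simp: when_def)

lemma finite_pvars: "finite (pvars p)"
  unfolding pvars_def by auto

lemma pvars_add: "pvars (p + q) \<subseteq> pvars p \<union> pvars q"
  unfolding pvars_def using keys_add[of p q] by blast

lemma pvars_uminus [simp]: "pvars (- p) = pvars p"
  unfolding pvars_def by simp

lemma pvars_diff: "pvars (p - q) \<subseteq> pvars p \<union> pvars q"
  unfolding pvars_def using keys_diff[of p q] by blast

lemma pvars_mult: "pvars (p * q) \<subseteq> pvars p \<union> pvars q"
proof
  fix v assume "v \<in> pvars (p * q)"
  then obtain mo where mo: "mo \<in> Poly_Mapping.keys (p*q)" "v \<in> Poly_Mapping.keys mo"
    unfolding pvars_def by auto
  then obtain a b where "mo = a + b" "a \<in> Poly_Mapping.keys p" "b \<in> Poly_Mapping.keys q"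
    using keys_mult[of p q] by blast
  with mo keys_add[of a b] show "v \<in> pvars p \<union> pvars q" unfolding pvars_def by blast
qed

lemma pvars_single: "pvars (Poly_Mapping.single mo c) \<subseteq> Poly_Mapping.keys mo"
  unfolding pvars_def by auto

lemma pvars_Var [simp]: "pvars (Var v :: ('f::zero_neq_one,'u) dpoly) = {v}"
  unfolding pvars_def Var_def by simp

lemma pvars_Const [simp]: "pvars (Const c) = {}"
  unfolding pvars_def Const_def by simp

lemma pvars_zero [simp]: "pvars 0 = {}"
  unfolding pvars_def by simp

lemma pvars_one [simp]: "pvars (1 :: ('f::zero_neq_one,'u) dpoly) = {}"
  unfolding pvars_def by simp

lemma pvars_sum: "pvars (sum f A) \<subseteq> (\<Union>i\<in>A. pvars (f i))"
  unfolding pvars_def using keys_sum[of f A] by blast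

definition cset :: "'u dvar set \<Rightarrow> ('f::zero, 'u) dpoly set" where
  "cset V = {p. pvars p \<subseteq> V}"

lemma dring_cset: "dring m = cset (dvars m)"
  unfolding dring_def cset_def by simp
lemma dring_le_cset: "dring_le m l = cset {v \<in> dvars m. vord v \<le> l}"
  unfolding dring_le_def cset_def by simp

lemma cset_add: "p \<in> cset V \<Longrightarrow> q \<in> cset V \<Longrightarrow> p + q \<in> cset V"
  unfolding cset_def using pvars_add by blast
lemma cset_diff: "p \<in> cset V \<Longrightarrow> q \<in> cset V \<Longrightarrow> p - q \<in> cset V"
  unfolding cset_def using pvars_diff by blast
lemma cset_uminus: "p \<in> cset V \<Longrightarrow> - p \<in> cset V"
  unfolding cset_def by simp
lemma cset_mult: "p \<in> cset V \<Longrightarrow> q \<in> cset V \<Longrightarrow> (p::('f::comm_ring_1,'u) dpoly) * q \<in> cset V"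
  unfolding cset_def using pvars_mult by blast
lemma cset_zero [simp]: "0 \<in> cset V"
  unfolding cset_def by simp
lemma cset_one [simp]: "(1::('f::comm_ring_1,'u) dpoly) \<in> cset V"
  unfolding cset_def by simp
lemma cset_Const [simp]: "Const c \<in> cset V"
  unfolding cset_def by simp
lemma cset_Var: "v \<in> V \<Longrightarrow> (Var v :: ('f::comm_ring_1,'u) dpoly) \<in> cset V"
  unfolding cset_def by simp
lemma cset_power: "p \<in> cset V \<Longrightarrow> (p::('f::comm_ring_1,'u) dpoly) ^ n \<in> cset V"
  by (induction n) (auto intro: cset_mult)
lemma cset_mono: "V \<subseteq> W \<Longrightarrow> p \<in> cset V \<Longrightarrow> p \<in> cset W"
  unfolding cset_def by blast
lemma cset_prod_list: "set hs \<subseteq> cset V \<Longrightarrow> prod_list (hs::('f::comm_ring_1,'u) dpoly list) \<in> cset V"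
  by (induction hs) (auto intro: cset_mult)




definition der :: "('f::comm_ring_1 \<Rightarrow> 'f) \<Rightarrow> bool" where
  "der d \<longleftrightarrow> (\<forall>a b. d (a + b) = d a + d b) \<and> (\<forall>a b. d (a * b) = a * d b + d a * b)"

lemma der_zero: "der d \<Longrightarrow> d 0 = 0"
  unfolding der_def by (metis add_cancel_right_right add_0)
lemma der_one: "der d \<Longrightarrow> d 1 = 0"
proof -
  assume "der d"
  then have "d (1*1) = 1 * d 1 + d 1 * 1" unfolding der_def by blast
  then show ?thesis by simp
qed

lemma update_notin: "a \<notin> Poly_Mapping.keys f \<Longrightarrow> Poly_Mapping.update a b f = f + Poly_Mapping.single a b"
  by (rule poly_mapping_eqI) (auto simp: lookup_update lookup_add lookup_single in_keys_iff)

lemma pm_induct [case_names zero add]: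
  assumes "P 0" "\<And>f a b. P f \<Longrightarrow> P (f + Poly_Mapping.single a b)"
  shows "P f"
  by (induction f rule: update_induct) (auto simp: update_notin assms)

lemma pm_induct_keys [case_names zero add]:
  assumes "P 0" "\<And>f a b. a \<notin> Poly_Mapping.keys f \<Longrightarrow> b \<noteq> 0 \<Longrightarrow> P f \<Longrightarrow> P (f + Poly_Mapping.single a b)"
  shows "P f"
  by (induction f rule: update_induct) (auto simp: update_notin assms)

lemma leibniz_mono:
  fixes T :: "('a::comm_monoid_add \<Rightarrow>\<^sub>0 'b::comm_ring_1) \<Rightarrow> ('a \<Rightarrow>\<^sub>0 'b)"
  assumes Tadd: "\<And>p q. T (p+q) = T p + T q"
  and mono: "\<And>a b c d. T (Poly_Mapping.single a b * Poly_Mapping.single c d)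
      = T (Poly_Mapping.single a b) * Poly_Mapping.single c d + Poly_Mapping.single a b * T (Poly_Mapping.single c d)"
  shows "T (p*q) = T p * q + p * T q"
proof -
  have T0: "T 0 = 0" using Tadd[of 0 0] by simp
  have inner: "T (Poly_Mapping.single a b * q) = T (Poly_Mapping.single a b) * q + Poly_Mapping.single a b * T q" for a b q
  proof (induction q rule: pm_induct)
    case zero then show ?case by (simp add: T0)
  next
    case (add f c d)
    have "T (Poly_Mapping.single a b * (f + Poly_Mapping.single c d))
        = T (Poly_Mapping.single a b * f) + T (Poly_Mapping.single a b * Poly_Mapping.single c d)"
      by (simp only: distrib_left Tadd)
    also have "\<dots> = (T (Poly_Mapping.single a b) * f + Poly_Mapping.single a b * T f)
       + (T (Poly_Mapping.single a b) * Poly_Mapping.single c d + Poly_Mapping.single a b * T (Poly_Mapping.single c d))"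
      by (simp only: add.IH mono)
    also have "\<dots> = T (Poly_Mapping.single a b) * (f + Poly_Mapping.single c d) + Poly_Mapping.single a b * T (f + Poly_Mapping.single c d)"
      by (simp only: Tadd distrib_left) (simp only: ac_simps)
    finally show ?case .
  qed
  show ?thesis
  proof (induction p rule: pm_induct)
    case zero then show ?case by (simp add: T0)
  next
    case (add f a b)
    have "T ((f + Poly_Mapping.single a b) * q) = T (f * q) + T (Poly_Mapping.single a b * q)"
      by (simp only: distrib_right Tadd)
    also have "\<dots> = (T f * q + f * T q) + (T (Poly_Mapping.single a b) * q + Poly_Mapping.single a b * T q)"
      by (simp only: add.IH inner)
    also have "\<dots> = T (f + Poly_Mapping.single a b) * q + (f + Poly_Mapping.single a b) * T q"
      by (simp only: Tadd distrib_right) (simp only: ac_simps)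
    finally show ?case .
  qed
qed

lemma sum_keys_ext:
  fixes h :: "'k \<Rightarrow> 'b::comm_monoid_add \<Rightarrow> 'c::comm_monoid_add"
  assumes h0: "\<And>k. h k 0 = 0" and K: "finite K" "Poly_Mapping.keys r \<subseteq> K"
  shows "(\<Sum>k\<in>Poly_Mapping.keys r. h k (Poly_Mapping.lookup r k)) = (\<Sum>k\<in>K. h k (Poly_Mapping.lookup r k))"
proof (rule sum.mono_neutral_left[OF K(1) K(2)])
  show "\<forall>i\<in>K - Poly_Mapping.keys r. h i (Poly_Mapping.lookup r i) = 0"
    using h0 by (simp add: in_keys_iff)
qed

lemma sum_keys_add:
  fixes h :: "'k \<Rightarrow> 'b::comm_monoid_add \<Rightarrow> 'c::comm_monoid_add"
  assumes h0: "\<And>k. h k 0 = 0" and hadd: "\<And>k x y. h k (x+y) = h k x + h k y"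
  shows "(\<Sum>k\<in>Poly_Mapping.keys (p+q). h k (Poly_Mapping.lookup (p+q) k))
       = (\<Sum>k\<in>Poly_Mapping.keys p. h k (Poly_Mapping.lookup p k)) + (\<Sum>k\<in>Poly_Mapping.keys q. h k (Poly_Mapping.lookup q k))"
proof -
  let ?K = "Poly_Mapping.keys p \<union> Poly_Mapping.keys q"
  have fK: "finite ?K" by simp
  have "(\<Sum>k\<in>Poly_Mapping.keys (p+q). h k (Poly_Mapping.lookup (p+q) k)) = (\<Sum>k\<in>?K. h k (Poly_Mapping.lookup (p+q) k))"
    by (rule sum_keys_ext[where h=h, OF h0 fK keys_add])
  also have "\<dots> = (\<Sum>k\<in>?K. h k (Poly_Mapping.lookup p k)) + (\<Sum>k\<in>?K. h k (Poly_Mapping.lookup q k))"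
    unfolding lookup_add hadd by (rule sum.distrib)
  also have "(\<Sum>k\<in>?K. h k (Poly_Mapping.lookup p k)) = (\<Sum>k\<in>Poly_Mapping.keys p. h k (Poly_Mapping.lookup p k))"
    by (rule sum_keys_ext[where h=h, OF h0 fK, symmetric]) blast
  also have "(\<Sum>k\<in>?K. h k (Poly_Mapping.lookup q k)) = (\<Sum>k\<in>Poly_Mapping.keys q. h k (Poly_Mapping.lookup q k))"
    by (rule sum_keys_ext[where h=h, OF h0 fK, symmetric]) blast
  finally show ?thesis .
qed

lemma pdiff_add: "pdiff v (p + q) = pdiff v p + pdiff v q"
  unfolding pdiff_def
  by (rule sum_keys_add) (simp_all only: distrib_right single_add mult_zero_left single_zero)

lemma pdiff_single: "pdiff v (Poly_Mapping.single a c :: ('f::comm_ring_1,'u) dpoly)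
   = Poly_Mapping.single (a - Poly_Mapping.single v 1) (c * of_nat (Poly_Mapping.lookup a v))"
  unfolding pdiff_def by (cases "c = 0") simp_all

lemma pdiff_notin: "v \<notin> pvars p \<Longrightarrow> pdiff v p = 0"
  unfolding pdiff_def pvars_def
  by (rule sum.neutral) (simp add: in_keys_iff)

lemma monom_shift:
  assumes "0 < Poly_Mapping.lookup a v"
  shows "a - Poly_Mapping.single v 1 + c = a + c - Poly_Mapping.single v (1::nat)"
proof (rule poly_mapping_eqI)
  fix k show "Poly_Mapping.lookup (a - Poly_Mapping.single v 1 + c) k = Poly_Mapping.lookup (a + c - Poly_Mapping.single v 1) k"
    using assms by (cases "k = v") (simp_all add: lookup_add lookup_minus lookup_single)
qed

lemma pdiff_leibniz: "pdiff v (p * q) = pdiff v p * q + p * pdiff v (q :: ('f::comm_ring_1,'u) dpoly)"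
proof (rule leibniz_mono[where T = "pdiff v"])
  show "pdiff v (p + q) = pdiff v p + pdiff v q" for p q :: "('f,'u) dpoly" by (rule pdiff_add)
next
  fix a c :: "'u dvar \<Rightarrow>\<^sub>0 nat" and b d :: 'f
  let ?e = "Poly_Mapping.single v (1::nat)"
  have "pdiff v (Poly_Mapping.single a b * Poly_Mapping.single c d)
     = Poly_Mapping.single (a + c - ?e) (b * d * of_nat (Poly_Mapping.lookup a v + Poly_Mapping.lookup c v))"
    by (simp add: mult_single pdiff_single lookup_add)
  also have "\<dots> = Poly_Mapping.single (a + c - ?e) (b * of_nat (Poly_Mapping.lookup a v) * d)
                 + Poly_Mapping.single (a + c - ?e) (b * (d * of_nat (Poly_Mapping.lookup c v)))"
    by (simp add: single_add[symmetric] algebra_simps)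
  also have "Poly_Mapping.single (a + c - ?e) (b * of_nat (Poly_Mapping.lookup a v) * d)
      = pdiff v (Poly_Mapping.single a b) * Poly_Mapping.single c d"
    using monom_shift[of a v c] by (cases "Poly_Mapping.lookup a v = 0") (simp_all add: pdiff_single mult_single)
  also have "Poly_Mapping.single (a + c - ?e) (b * (d * of_nat (Poly_Mapping.lookup c v)))
      = Poly_Mapping.single a b * pdiff v (Poly_Mapping.single c d)"
    using monom_shift[of c v a] by (cases "Poly_Mapping.lookup c v = 0") (simp_all add: pdiff_single mult_single add.commute)
  finally show "pdiff v (Poly_Mapping.single a b * Poly_Mapping.single c d)
      = pdiff v (Poly_Mapping.single a b) * Poly_Mapping.single c d + Poly_Mapping.single a b * pdiff v (Poly_Mapping.single c d)" .
qed




lemma map_add_der: "der d \<Longrightarrow> Poly_Mapping.map d (p + q) = Poly_Mapping.map d p + Poly_Mapping.map d q"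
  by (rule poly_mapping_eqI) (simp add: lookup_map0 der_zero lookup_add der_def)

lemma map_leibniz:
  assumes "der d"
  shows "Poly_Mapping.map d (p * q) = Poly_Mapping.map d p * q + p * Poly_Mapping.map d (q :: ('a::comm_monoid_add \<Rightarrow>\<^sub>0 'f::comm_ring_1))"
proof (rule leibniz_mono)
  show "Poly_Mapping.map d (p + q) = Poly_Mapping.map d p + Poly_Mapping.map d q" for p q :: "'a \<Rightarrow>\<^sub>0 'f"
    using assms by (rule map_add_der)
next
  fix a c :: 'a and b e :: 'f
  have d0: "d 0 = 0" using assms by (rule der_zero)
  have dm: "d (b * e) = b * d e + d b * e" using assms unfolding der_def by blast
  show "Poly_Mapping.map d (Poly_Mapping.single a b * Poly_Mapping.single c e) =
         Poly_Mapping.map d (Poly_Mapping.single a b) * Poly_Mapping.single c e +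
         Poly_Mapping.single a b * Poly_Mapping.map d (Poly_Mapping.single c e)"
    by (simp add: mult_single d0 dm single_add algebra_simps)
qed

definition DV :: "('f::comm_ring_1 \<Rightarrow> 'f) \<Rightarrow> ('u dvar \<Rightarrow> ('f,'u) dpoly) \<Rightarrow> 'u dvar set \<Rightarrow> ('f,'u) dpoly \<Rightarrow> ('f,'u) dpoly" where
  "DV d W V p = Poly_Mapping.map d p + (\<Sum>v\<in>V. pdiff v p * W v)"

lemma DV_add: "der d \<Longrightarrow> DV d W V (p + q) = DV d W V p + DV d W V q"
  unfolding DV_def by (simp add: map_add_der pdiff_add distrib_right sum.distrib algebra_simps)

lemma DV_leibniz: "der d \<Longrightarrow> DV d W V (p * q) = DV d W V p * q + p * DV d W V q"
  unfolding DV_def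
  by (simp add: map_leibniz pdiff_leibniz distrib_right distrib_left sum.distrib sum_distrib_left sum_distrib_right algebra_simps)

lemma dder_DV:
  assumes "finite V" "pvars p \<subseteq> V"
  shows "dder \<delta> i p = DV (\<delta> i) (\<lambda>v. Var (vshift i v)) V p"
  unfolding dder_def DV_def
proof -
  have "(\<Sum>v\<in>pvars p. pdiff v p * Var (vshift i v)) = (\<Sum>v\<in>V. pdiff v p * Var (vshift i v))"
    by (rule sum.mono_neutral_left[OF assms(1) assms(2)]) (simp add: pdiff_notin)
  then show "Poly_Mapping.map (\<delta> i) p + (\<Sum>v\<in>pvars p. pdiff v p * Var (vshift i v)) =
    Poly_Mapping.map (\<delta> i) p + (\<Sum>v\<in>V. pdiff v p * Var (vshift i v))" by simp
qed

lemma dder_add: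
  assumes "der (\<delta> i)"
  shows "dder \<delta> i (p + q) = dder \<delta> i p + dder \<delta> i q"
proof -
  let ?V = "pvars p \<union> pvars q"
  have f: "finite ?V" by (simp add: finite_pvars)
  show ?thesis
    using dder_DV[OF f, of p \<delta> i] dder_DV[OF f, of q \<delta> i] dder_DV[OF f, of "p+q" \<delta> i] pvars_add[of p q]
      DV_add[OF assms] by auto
qed

lemma dder_mult:
  assumes "der (\<delta> i)"
  shows "dder \<delta> i (p * q) = dder \<delta> i p * q + p * dder \<delta> i q"
proof -
  let ?V = "pvars p \<union> pvars q"
  have f: "finite ?V" by (simp add: finite_pvars)
  show ?thesis
    using dder_DV[OF f, of p \<delta> i] dder_DV[OF f, of q \<delta> i] dder_DV[OF f, of "p*q" \<delta> i] pvars_mult[of p q]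
      DV_leibniz[OF assms] by auto
qed

lemma dder_zero: "der (\<delta> i) \<Longrightarrow> dder \<delta> i 0 = 0"
  using dder_add[of \<delta> i 0 0] by simp

lemma dder_uminus: "der (\<delta> i) \<Longrightarrow> dder \<delta> i (- p) = - dder \<delta> i p"
proof -
  assume a: "der (\<delta> i)"
  have "dder \<delta> i p + dder \<delta> i (- p) = 0" using dder_add[of \<delta> i p "-p", OF a] dder_zero[of \<delta> i, OF a] by (metis add.right_inverse)
  then show ?thesis by (simp add: add_eq_0_iff)
qed

lemma dder_diff: "der (\<delta> i) \<Longrightarrow> dder \<delta> i (p - q) = dder \<delta> i p - dder \<delta> i q"
  using dder_add[of \<delta> i p "-q"] dder_uminus[of \<delta> i q] by simp

lemma dder_Var:
  assumes "der (\<delta> i)"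
  shows "dder \<delta> i (Var v) = Var (vshift i v)"
proof -
  have "Poly_Mapping.map (\<delta> i) (Var v) = 0"
    unfolding Var_def using der_one[OF assms] der_zero[OF assms] by simp
  moreover have "pdiff v (Var v :: ('a,'b) dpoly) = 1"
    unfolding Var_def by (simp add: pdiff_single)
  ultimately show ?thesis unfolding dder_def by simp
qed

lemma dder_Const:
  assumes "der (\<delta> i)"
  shows "dder \<delta> i (Const c) = Const (\<delta> i c)"
  unfolding dder_def pvars_Const using der_zero[OF assms] by (simp add: Const_def)

lemma pvars_map: "d 0 = 0 \<Longrightarrow> pvars (Poly_Mapping.map d p) \<subseteq> pvars p"
  unfolding pvars_def by (auto simp: in_keys_iff lookup_map0) (metis in_keys_iff)

lemma keys_monom_minus: "Poly_Mapping.keys (mo - e) \<subseteq> Poly_Mapping.keys (mo :: 'a \<Rightarrow>\<^sub>0 nat)"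
  by (auto simp: in_keys_iff lookup_minus)

lemma pvars_pdiff: "pvars (pdiff v p) \<subseteq> pvars p"
proof -
  have "pvars (pdiff v p) \<subseteq> (\<Union>mo\<in>Poly_Mapping.keys p. pvars (Poly_Mapping.single (mo - Poly_Mapping.single v 1)
      (Poly_Mapping.lookup p mo * of_nat (Poly_Mapping.lookup mo v))))"
    unfolding pdiff_def by (rule pvars_sum)
  also have "\<dots> \<subseteq> pvars p"
    using pvars_single keys_monom_minus unfolding pvars_def by fastforce
  finally show ?thesis .
qed

lemma pvars_dder:
  assumes "der (\<delta> i)"
  shows "pvars (dder \<delta> i p) \<subseteq> pvars p \<union> vshift i ` pvars p"
proof -
  have "pvars (dder \<delta> i p) \<subseteq> pvars (Poly_Mapping.map (\<delta> i) p) \<union> pvars (\<Sum>v\<in>pvars p. pdiff v p * Var (vshift i v))"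
    unfolding dder_def by (rule pvars_add)
  also have "\<dots> \<subseteq> pvars p \<union> (\<Union>v\<in>pvars p. pvars (pdiff v p * Var (vshift i v)))"
    using pvars_map[of "\<delta> i" p, OF der_zero[OF assms]] pvars_sum by blast
  also have "\<dots> \<subseteq> pvars p \<union> vshift i ` pvars p"
    using pvars_mult pvars_pdiff by fastforce
  finally show ?thesis .
qed




lemma sum_list_incr: "i < length xs \<Longrightarrow> sum_list (xs[i := xs ! i + 1]) = sum_list xs + (1::nat)"
  by (induction xs arbitrary: i) (auto split: nat.splits)

lemma vshift_dvars: "i < m \<Longrightarrow> v \<in> dvars m \<Longrightarrow> vshift i v \<in> dvars m"
  unfolding dvars_def vshift_def by simp

lemma vord_vshift: "i < m \<Longrightarrow> v \<in> dvars m \<Longrightarrow> vord (vshift i v) = vord v + 1"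
  unfolding dvars_def vshift_def vord_def using sum_list_incr[of i "snd v"] by simp

lemma diff_field_der: "diff_field m \<delta> \<Longrightarrow> i < m \<Longrightarrow> der (\<delta> i)"
  unfolding diff_field_def der_def by (simp add: mult.commute)

lemma dder_dring:
  assumes "der (\<delta> i)" "i < m" "p \<in> dring m"
  shows "dder \<delta> i p \<in> dring m"
  using pvars_dder[of \<delta> i p, OF assms(1)] assms(3) vshift_dvars[OF assms(2)]
  unfolding dring_def by blast

lemma dder_dring_le:
  assumes "der (\<delta> i)" "i < m" "p \<in> dring_le m l"
  shows "dder \<delta> i p \<in> dring_le m (Suc l)"
proof -
  have P: "\<And>v. v \<in> pvars p \<Longrightarrow> v \<in> dvars m \<and> vord v \<le> l" using assms(3) unfolding dring_le_def by blast
  have "pvars (dder \<delta> i p) \<subseteq> {v \<in> dvars m. vord v \<le> Suc l}"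
  proof
    fix w assume "w \<in> pvars (dder \<delta> i p)"
    then have "w \<in> pvars p \<or> (\<exists>v\<in>pvars p. w = vshift i v)"
      using pvars_dder[of \<delta> i p, OF assms(1)] by blast
    then show "w \<in> {v \<in> dvars m. vord v \<le> Suc l}"
    proof
      assume "w \<in> pvars p" then show ?thesis using P[of w] by simp
    next
      assume "\<exists>v\<in>pvars p. w = vshift i v"
      then obtain v where v: "v \<in> pvars p" "w = vshift i v" by blast
      then show ?thesis using P[OF v(1)] vshift_dvars[OF assms(2), of v] vord_vshift[OF assms(2), of v] by simp
    qed
  qed
  then show ?thesis unfolding dring_le_def by simp
qed

lemma dring_le_dring: "dring_le m l \<subseteq> dring m"
  unfolding dring_le_def dring_def by blast

lemma dring_le_mono: "l \<le> k \<Longrightarrow> dring_le m l \<subseteq> dring_le m k"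
  unfolding dring_le_def by auto

lemma pvars_initial: "pvars (initial r p) \<subseteq> pvars p"
proof -
  have "pvars (initial r p) \<subseteq> (\<Union>mo\<in>{mo\<in>Poly_Mapping.keys p. Poly_Mapping.lookup mo (leader r p) = vdeg (leader r p) p}.
     pvars (Poly_Mapping.single (mo - Poly_Mapping.single (leader r p) (vdeg (leader r p) p)) (Poly_Mapping.lookup p mo)))"
    unfolding initial_def Let_def by (rule pvars_sum)
  also have "\<dots> \<subseteq> pvars p"
    using pvars_single keys_monom_minus unfolding pvars_def by fastforce
  finally show ?thesis .
qed

lemma HS_dring: "S \<subseteq> dring m \<Longrightarrow> HS r S \<subseteq> dring m"
  unfolding HS_def separant_def dring_def using pvars_initial pvars_pdiff by blast

lemma ideal_diff: "is_ideal (dring m) I \<Longrightarrow> a \<in> I \<Longrightarrow> b \<in> I \<Longrightarrow> a - b \<in> I"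
proof -
  assume I: "is_ideal (dring m) I" and ab: "a \<in> I" "b \<in> I"
  have "- 1 \<in> dring m" unfolding dring_def by simp
  then have "(- 1) * b \<in> I" using I ab unfolding is_ideal_def by blast
  then have "a + (- 1) * b \<in> I" using I ab unfolding is_ideal_def by blast
  then show ?thesis by simp
qed

lemma ideal_mult: "is_ideal (dring m) I \<Longrightarrow> a \<in> I \<Longrightarrow> r \<in> dring m \<Longrightarrow> r * a \<in> I"
  unfolding is_ideal_def by blast
lemma ideal_mult2: "is_ideal (dring m) I \<Longrightarrow> a \<in> I \<Longrightarrow> r \<in> dring m \<Longrightarrow> a * r \<in> I"
  unfolding is_ideal_def by (metis mult.commute)
lemma ideal_add: "is_ideal (dring m) I \<Longrightarrow> a \<in> I \<Longrightarrow> b \<in> I \<Longrightarrow> a + b \<in> I"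
  unfolding is_ideal_def by blast
lemma ideal_sub: "is_ideal (dring m) I \<Longrightarrow> a \<in> I \<Longrightarrow> a \<in> dring m"
  unfolding is_ideal_def by blast
lemma ideal_zero: "is_ideal (dring m) I \<Longrightarrow> 0 \<in> I"
  unfolding is_ideal_def by blast

lemma dring_add: "a \<in> dring m \<Longrightarrow> b \<in> dring m \<Longrightarrow> a + b \<in> dring m"
  unfolding dring_cset by (rule cset_add)
lemma dring_diff: "a \<in> dring m \<Longrightarrow> b \<in> dring m \<Longrightarrow> a - b \<in> dring m"
  unfolding dring_cset by (rule cset_diff)
lemma dring_mult: "a \<in> dring m \<Longrightarrow> b \<in> dring m \<Longrightarrow> (a::('f::comm_ring_1,'u) dpoly) * b \<in> dring m"
  unfolding dring_cset by (rule cset_mult)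
lemma dring_one [simp]: "(1::('f::comm_ring_1,'u) dpoly) \<in> dring m"
  unfolding dring_def by simp
lemma dring_zero [simp]: "0 \<in> dring m"
  unfolding dring_cset by simp
lemma dring_prod_list: "set hs \<subseteq> dring m \<Longrightarrow> prod_list (hs::('f::comm_ring_1,'u) dpoly list) \<in> dring m"
  unfolding dring_cset by (rule cset_prod_list)

lemma is_ideal_dring: "is_ideal (dring m) (dring m)"
  unfolding is_ideal_def using dring_add dring_mult dring_zero by blast

lemma is_diff_ideal_dring:
  assumes "diff_field m \<delta>"
  shows "is_diff_ideal m \<delta> (dring m)"
  unfolding is_diff_ideal_def using is_ideal_dring dder_dring diff_field_der[OF assms] by blast

lemma diff_ideal_gen_is:
  assumes "diff_field m \<delta>" "S \<subseteq> dring m"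
  shows "is_diff_ideal m \<delta> (diff_ideal_gen m \<delta> S)"
proof -
  let ?F = "{I. is_diff_ideal m \<delta> I \<and> S \<subseteq> I}"
  have ne: "dring m \<in> ?F" using is_diff_ideal_dring[OF assms(1)] assms(2) by blast
  show ?thesis
    unfolding is_diff_ideal_def[of m \<delta> "diff_ideal_gen m \<delta> S"] is_ideal_def[of "dring m" "diff_ideal_gen m \<delta> S"]
    unfolding diff_ideal_gen_def
  proof (intro conjI)
    show "\<Inter> ?F \<subseteq> dring m" using ne by blast
    show "0 \<in> \<Inter> ?F" unfolding is_diff_ideal_def is_ideal_def by blast
    show "\<forall>a\<in>\<Inter> ?F. \<forall>b\<in>\<Inter> ?F. a + b \<in> \<Inter> ?F" unfolding is_diff_ideal_def is_ideal_def by blast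
    show "\<forall>a\<in>\<Inter> ?F. \<forall>r\<in>dring m. r * a \<in> \<Inter> ?F" unfolding is_diff_ideal_def is_ideal_def by blast
    show "\<forall>i<m. \<forall>p\<in>\<Inter> ?F. dder \<delta> i p \<in> \<Inter> ?F" unfolding is_diff_ideal_def is_ideal_def by blast
  qed
qed

lemma saturation_ideal:
  assumes D: "is_ideal (dring m) D" and H: "H \<subseteq> dring m"
  shows "is_ideal (dring m) (saturation (dring m) D (H :: ('f::comm_ring_1,'u) dpoly set))"
  unfolding is_ideal_def
proof (intro conjI ballI)
  show "saturation (dring m) D H \<subseteq> dring m" unfolding saturation_def by blast
  show "0 \<in> saturation (dring m) D H" unfolding saturation_def using ideal_zero[OF D]
    by (auto intro!: exI[of _ "[]"])
next
  fix a b :: "('f,'u) dpoly" assume "a \<in> saturation (dring m) D H" "b \<in> saturation (dring m) D H"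
  then obtain hs ks where hs: "set hs \<subseteq> H" "prod_list hs * a \<in> D" "a \<in> dring m"
    and ks: "set ks \<subseteq> H" "prod_list ks * b \<in> D" "b \<in> dring m"
    unfolding saturation_def by blast
  have "prod_list (hs @ ks) * (a + b) = prod_list ks * (prod_list hs * a) + prod_list hs * (prod_list ks * b)"
    by (simp add: algebra_simps)
  also have "\<dots> \<in> D"
  proof -
    have ph: "prod_list hs \<in> dring m" and pk: "prod_list ks \<in> dring m" using hs ks H by (auto intro: dring_prod_list)
    show ?thesis using ideal_add[OF D ideal_mult[OF D hs(2) pk] ideal_mult[OF D ks(2) ph]] by simp
  qed
  finally show "a + b \<in> saturation (dring m) D H"
    unfolding saturation_def using hs ks by (auto intro!: exI[of _ "hs @ ks"] dring_add)
next
  fix a r :: "('f,'u) dpoly" assume "a \<in> saturation (dring m) D H" "r \<in> dring m"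
  then obtain hs where hs: "set hs \<subseteq> H" "prod_list hs * a \<in> D" "a \<in> dring m"
    unfolding saturation_def by blast
  have "prod_list hs * (r * a) = r * (prod_list hs * a)" by (simp add: algebra_simps)
  also have "\<dots> \<in> D" using ideal_mult[OF D hs(2) \<open>r \<in> dring m\<close>] .
  finally show "r * a \<in> saturation (dring m) D H"
    unfolding saturation_def using hs \<open>r \<in> dring m\<close> by (auto intro!: exI[of _ hs] dring_mult)
qed

lemma saturation_diff:
  assumes F: "diff_field m \<delta>" and D: "is_diff_ideal m \<delta> D" and H: "H \<subseteq> dring m" and i: "i < m"
    and p: "p \<in> saturation (dring m) D H"
  shows "dder \<delta> i p \<in> saturation (dring m) D H"
proof -
  have Di: "is_ideal (dring m) D" using D unfolding is_diff_ideal_def by blast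
  have der: "der (\<delta> i)" using diff_field_der[OF F i] .
  obtain hs where hs: "set hs \<subseteq> H" "prod_list hs * p \<in> D" "p \<in> dring m"
    using p unfolding saturation_def by blast
  define h where "h = prod_list hs"
  have hR: "h \<in> dring m" unfolding h_def using hs H by (intro dring_prod_list) auto
  have dh: "dder \<delta> i h \<in> dring m" using dder_dring[of \<delta> i m h, OF der i hR] .
  have dp: "dder \<delta> i p \<in> dring m" using dder_dring[of \<delta> i m p, OF der i hs(3)] .
  have hp: "h * p \<in> D" using hs unfolding h_def by simp
  have "dder \<delta> i (h * p) \<in> D" using D hp i unfolding is_diff_ideal_def by blast
  then have a: "h * dder \<delta> i (h * p) \<in> D" using ideal_mult[OF Di _ hR] by blast
  have b: "dder \<delta> i h * (h * p) \<in> D" using ideal_mult[OF Di hp dh] .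
  have "h * dder \<delta> i (h * p) - dder \<delta> i h * (h * p) = prod_list (hs @ hs) * dder \<delta> i p"
    unfolding dder_mult[of \<delta> i, OF der] h_def by (simp add: algebra_simps)
  then have "prod_list (hs @ hs) * dder \<delta> i p \<in> D" using ideal_diff[OF Di a b] by simp
  then show ?thesis unfolding saturation_def using hs dp by (auto intro!: exI[of _ "hs @ hs"])
qed

lemma characterizable_ideal:
  assumes F: "diff_field m \<delta>" and C: "characterizable m \<delta> I"
  shows "is_ideal (dring m) I" "\<forall>i<m. \<forall>p\<in>I. dder \<delta> i p \<in> I"
proof -
  obtain r S where rS: "diff_regular_chain m \<delta> r S" "I = charI m \<delta> r S"
    using C unfolding characterizable_def by blast
  have S: "S \<subseteq> dring m" using rS(1) unfolding diff_regular_chain_def weak_d_triangular_def by blast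
  have D: "is_diff_ideal m \<delta> (diff_ideal_gen m \<delta> S)" by (rule diff_ideal_gen_is[OF F S])
  have H: "HS r S \<subseteq> dring m" by (rule HS_dring[OF S])
  show "is_ideal (dring m) I" unfolding rS(2) charI_def
    by (rule saturation_ideal[OF _ H]) (use D in \<open>simp add: is_diff_ideal_def\<close>)
  show "\<forall>i<m. \<forall>p\<in>I. dder \<delta> i p \<in> I" unfolding rS(2) charI_def
    using saturation_diff[OF F D H] by blast
qed




abbreviation valid :: "nat \<Rightarrow> ('f::comm_ring_1,'u) dpoly set \<Rightarrow> ('f,'u) dpoly \<Rightarrow> ('f,'u) dpoly \<Rightarrow> bool" where
  "valid m I a b \<equiv> a \<in> dring m \<and> nzd_mod (dring m) I b"

lemma nzd_one: "nzd_mod (dring m) I (1::('f::comm_ring_1,'u) dpoly)"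
  unfolding nzd_mod_def by simp

lemma nzd_mult:
  assumes "nzd_mod (dring m) I b" "nzd_mod (dring m) I d"
  shows "nzd_mod (dring m) I (b * (d::('f::comm_ring_1,'u) dpoly))"
  unfolding nzd_mod_def
proof (intro conjI ballI impI)
  show "b * d \<in> dring m" using assms unfolding nzd_mod_def by (auto intro: dring_mult)
next
  fix q assume q: "q \<in> dring m" "b * d * q \<in> I"
  have "d * q \<in> dring m" using assms q unfolding nzd_mod_def by (auto intro: dring_mult)
  moreover have "b * (d * q) \<in> I" using q by (simp add: mult.assoc)
  ultimately have "d * q \<in> I" using assms unfolding nzd_mod_def by blast
  then show "q \<in> I" using assms q unfolding nzd_mod_def by blast
qed

lemma nzd_dring: "nzd_mod (dring m) I b \<Longrightarrow> b \<in> dring m"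
  unfolding nzd_mod_def by blast

lemma mem_fclass:
  "(c, d) \<in> fclass (dring m) I a b \<longleftrightarrow> a \<in> dring m \<and> c \<in> dring m \<and> nzd_mod (dring m) I b \<and> nzd_mod (dring m) I d \<and> a * d - c * b \<in> I"
  unfolding fclass_def frac_rel_def by auto

lemma fclass_refl:
  assumes I: "is_ideal (dring m) I" and v: "valid m I a b"
  shows "(a, b) \<in> fclass (dring m) I a b"
  using v ideal_zero[OF I] by (simp add: mem_fclass)

lemma fclass_eq:
  fixes a b c d :: "('f::comm_ring_1,'u) dpoly"
  assumes I: "is_ideal (dring m) I" and v1: "valid m I a b" and v2: "valid m I c d"
    and r: "a * d - c * b \<in> I"
  shows "fclass (dring m) I a b = fclass (dring m) I c d"
proof (rule set_eqI)
  fix x :: "('f,'u) dpoly \<times> ('f,'u) dpoly" obtain e f where x: "x = (e, f)" by (cases x)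
  have bR: "b \<in> dring m" and dR: "d \<in> dring m" using v1 v2 nzd_dring by blast+
  show "x \<in> fclass (dring m) I a b \<longleftrightarrow> x \<in> fclass (dring m) I c d"
    unfolding x mem_fclass
  proof (intro iffI; elim conjE; intro conjI)
    assume e: "e \<in> dring m" and f: "nzd_mod (dring m) I f" and h: "a * f - e * b \<in> I"
    have fR: "f \<in> dring m" using f nzd_dring by blast
    show "e \<in> dring m" "nzd_mod (dring m) I f" "c \<in> dring m" "nzd_mod (dring m) I d" using e f v2 by auto
    have "b * (c * f - e * d) = d * (a * f - e * b) - f * (a * d - c * b)" by (simp add: algebra_simps)
    also have "\<dots> \<in> I" by (rule ideal_diff[OF I ideal_mult[OF I h dR] ideal_mult[OF I r fR]])
    finally have "b * (c * f - e * d) \<in> I" .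
    moreover have "c * f - e * d \<in> dring m" using v2 e fR dR by (intro dring_diff dring_mult) auto
    ultimately show "c * f - e * d \<in> I" using v1 unfolding nzd_mod_def by blast
  next
    assume e: "e \<in> dring m" and f: "nzd_mod (dring m) I f" and h: "c * f - e * d \<in> I"
    have fR: "f \<in> dring m" using f nzd_dring by blast
    show "e \<in> dring m" "nzd_mod (dring m) I f" "a \<in> dring m" "nzd_mod (dring m) I b" using e f v1 by auto
    have "d * (a * f - e * b) = f * (a * d - c * b) + b * (c * f - e * d)" by (simp add: algebra_simps)
    also have "\<dots> \<in> I" by (rule ideal_add[OF I ideal_mult[OF I r fR] ideal_mult[OF I h bR]])
    finally have "d * (a * f - e * b) \<in> I" .
    moreover have "a * f - e * b \<in> dring m" using v1 e fR bR by (intro dring_diff dring_mult) auto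
    ultimately show "a * f - e * b \<in> I" using v2 unfolding nzd_mod_def by blast
  qed
qed

lemma fclass_mem_eq:
  assumes I: "is_ideal (dring m) I" and v: "valid m I a b" and c: "(c, d) \<in> fclass (dring m) I a b"
  shows "fclass (dring m) I c d = fclass (dring m) I a b"
proof -
  have h: "c \<in> dring m" "nzd_mod (dring m) I d" "a * d - c * b \<in> I" using c by (simp_all add: mem_fclass)
  have "0 - (a * d - c * b) \<in> I" by (rule ideal_diff[OF I ideal_zero[OF I] h(3)])
  then have "c * b - a * d \<in> I" by simp
  then show ?thesis using fclass_eq[OF I _ v] h by blast
qed




lemma Union_const: "X \<in> S \<Longrightarrow> (\<And>Y. Y \<in> S \<Longrightarrow> Y = X) \<Longrightarrow> \<Union>S = X"
  by blast

lemma fclass_valid: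
  "(c, d) \<in> fclass (dring m) I a b \<Longrightarrow> valid m I a b \<and> valid m I c d"
  by (simp add: mem_fclass)

lemma qmul_fclass:
  fixes a b c d :: "('f::comm_ring_1,'u) dpoly"
  assumes I: "is_ideal (dring m) I" and v1: "valid m I a b" and v2: "valid m I c d"
  shows "qmul (dring m) I (fclass (dring m) I a b) (fclass (dring m) I c d) = fclass (dring m) I (a * c) (b * d)"
  unfolding qmul_def
proof (rule Union_const)
  have vv: "valid m I (a * c) (b * d)" using v1 v2 by (auto intro: dring_mult nzd_mult)
  show "fclass (dring m) I (a * c) (b * d) \<in> {fclass (dring m) I (a' * c') (b' * d') |a' b' c' d'.
          (a', b') \<in> fclass (dring m) I a b \<and> (c', d') \<in> fclass (dring m) I c d}"
    using fclass_refl[OF I v1] fclass_refl[OF I v2] by blast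
  fix Y assume "Y \<in> {fclass (dring m) I (a' * c') (b' * d') |a' b' c' d'.
          (a', b') \<in> fclass (dring m) I a b \<and> (c', d') \<in> fclass (dring m) I c d}"
  then obtain a' b' c' d' where Y: "Y = fclass (dring m) I (a' * c') (b' * d')"
    and m1: "(a', b') \<in> fclass (dring m) I a b" and m2: "(c', d') \<in> fclass (dring m) I c d" by blast
  have h1: "valid m I a' b'" "a * b' - a' * b \<in> I" using m1 by (simp_all add: mem_fclass)
  have h2: "valid m I c' d'" "c * d' - c' * d \<in> I" using m2 by (simp_all add: mem_fclass)
  have v': "valid m I (a' * c') (b' * d')" using h1 h2 by (auto intro: dring_mult nzd_mult)
  define x where "x = a * b' - a' * b"
  define y where "y = c * d' - c' * d"
  have yR: "y \<in> dring m" using ideal_sub[OF I h2(2)] unfolding y_def .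
  have cd'R: "c * d' \<in> dring m" using v2 h2 nzd_dring by (auto intro!: dring_mult)
  have R: "y - c * d' \<in> dring m" "a * b' \<in> dring m"
    using dring_diff[OF yR cd'R] v1 h1 nzd_dring by (auto intro!: dring_mult)
  have "a' * c' * (b * d) - a * c * (b' * d') = x * (y - c * d') - y * (a * b')"
    unfolding x_def y_def by (simp add: algebra_simps)
  also have "\<dots> \<in> I"
    using h1 h2 unfolding x_def[symmetric] y_def[symmetric]
    by (intro ideal_diff[OF I] ideal_mult2[OF I _ R(1)] ideal_mult2[OF I _ R(2)])
  finally show "Y = fclass (dring m) I (a * c) (b * d)" unfolding Y by (rule fclass_eq[OF I v' vv])
qed

lemma qadd_fclass:
  fixes a b c d :: "('f::comm_ring_1,'u) dpoly"
  assumes I: "is_ideal (dring m) I" and v1: "valid m I a b" and v2: "valid m I c d"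
  shows "qadd (dring m) I (fclass (dring m) I a b) (fclass (dring m) I c d) = fclass (dring m) I (a * d + c * b) (b * d)"
  unfolding qadd_def
proof (rule Union_const)
  have bR: "b \<in> dring m" and dR: "d \<in> dring m" using v1 v2 nzd_dring by blast+
  have vv: "valid m I (a * d + c * b) (b * d)" using v1 v2 bR dR by (auto intro: dring_mult nzd_mult dring_add)
  show "fclass (dring m) I (a * d + c * b) (b * d) \<in> {fclass (dring m) I (a' * d' + c' * b') (b' * d') |a' b' c' d'.
          (a', b') \<in> fclass (dring m) I a b \<and> (c', d') \<in> fclass (dring m) I c d}"
    using fclass_refl[OF I v1] fclass_refl[OF I v2] by blast
  fix Y assume "Y \<in> {fclass (dring m) I (a' * d' + c' * b') (b' * d') |a' b' c' d'.
          (a', b') \<in> fclass (dring m) I a b \<and> (c', d') \<in> fclass (dring m) I c d}"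
  then obtain a' b' c' d' where Y: "Y = fclass (dring m) I (a' * d' + c' * b') (b' * d')"
    and m1: "(a', b') \<in> fclass (dring m) I a b" and m2: "(c', d') \<in> fclass (dring m) I c d" by blast
  have h1: "valid m I a' b'" "a * b' - a' * b \<in> I" using m1 by (simp_all add: mem_fclass)
  have h2: "valid m I c' d'" "c * d' - c' * d \<in> I" using m2 by (simp_all add: mem_fclass)
  have b'R: "b' \<in> dring m" and d'R: "d' \<in> dring m" using h1 h2 nzd_dring by blast+
  have v': "valid m I (a' * d' + c' * b') (b' * d')" using h1 h2 b'R d'R by (auto intro: dring_mult nzd_mult dring_add)
  define x where "x = a * b' - a' * b"
  define y where "y = c * d' - c' * d"
  have R: "d * d' \<in> dring m" "b * b' \<in> dring m" using bR dR b'R d'R by (auto intro: dring_mult)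
  have "(a' * d' + c' * b') * (b * d) - (a * d + c * b) * (b' * d') = 0 - (d * d') * x - (b * b') * y"
    unfolding x_def y_def by (simp add: algebra_simps)
  also have "\<dots> \<in> I"
    using h1 h2 unfolding x_def[symmetric] y_def[symmetric]
    by (intro ideal_diff[OF I] ideal_zero[OF I] ideal_mult[OF I _ R(1)] ideal_mult[OF I _ R(2)])
  finally show "Y = fclass (dring m) I (a * d + c * b) (b * d)" unfolding Y by (rule fclass_eq[OF I v' vv])
qed

lemma dquot_fclass: "valid m I a b \<Longrightarrow> fclass (dring m) I a b \<in> dquot m I"
  unfolding dquot_def tquot_def by blast

lemma dquot_E: "Y \<in> dquot m I \<Longrightarrow> \<exists>a b. valid m I a b \<and> Y = fclass (dring m) I a b"
  unfolding dquot_def tquot_def by blast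

lemma qder_Var:
  fixes I :: "('f::field_char_0,'u) dpoly set"
  assumes F: "diff_field m \<delta>" and I: "is_ideal (dring m) I" and ID: "\<forall>i<m. \<forall>p\<in>I. dder \<delta> i p \<in> I"
    and i: "i < m" and v: "v \<in> dvars m"
  shows "qder m \<delta> i I (fclass (dring m) I (Var v) 1) = fclass (dring m) I (Var (vshift i v)) 1"
  unfolding qder_def
proof (rule Union_const)
  have der: "der (\<delta> i)" by (rule diff_field_der[OF F i])
  have vR: "(Var v :: ('f,'u) dpoly) \<in> dring m" unfolding dring_def using v by simp
  have wR: "(Var (vshift i v) :: ('f,'u) dpoly) \<in> dring m" unfolding dring_def using vshift_dvars[OF i v] by simp
  have vw: "valid m I (Var (vshift i v)) 1" using wR nzd_one by blast
  have key: "\<And>a b. (a, b) \<in> fclass (dring m) I (Var v) 1 \<Longrightarrow>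
     valid m I (dder \<delta> i a * b - a * dder \<delta> i b) (b * b) \<and>
     fclass (dring m) I (dder \<delta> i a * b - a * dder \<delta> i b) (b * b) = fclass (dring m) I (Var (vshift i v)) 1"
  proof -
    fix a b assume ab: "(a, b) \<in> fclass (dring m) I (Var v) 1"
    have h: "valid m I a b" "Var v * b - a * 1 \<in> I" using ab by (simp_all add: mem_fclass)
    have bR: "b \<in> dring m" using h nzd_dring by blast
    have daR: "dder \<delta> i a \<in> dring m" using dder_dring[of \<delta> i m a, OF der i] h by blast
    have dbR: "dder \<delta> i b \<in> dring m" using dder_dring[of \<delta> i m b, OF der i bR] .
    have vN: "valid m I (dder \<delta> i a * b - a * dder \<delta> i b) (b * b)"
      using h bR daR dbR by (auto intro!: dring_diff dring_mult nzd_mult)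
    define e where "e = a - Var v * b"
    have eI: "e \<in> I" using ideal_diff[OF I ideal_zero[OF I] h(2)] unfolding e_def by simp
    have deI: "dder \<delta> i e \<in> I" using ID i eI by blast
    have "(dder \<delta> i a * b - a * dder \<delta> i b) * 1 - Var (vshift i v) * (b * b) = dder \<delta> i e * b - e * dder \<delta> i b"
      unfolding e_def by (simp add: dder_diff[of \<delta> i, OF der] dder_mult[of \<delta> i, OF der] dder_Var[of \<delta> i, OF der] algebra_simps)
    also have "\<dots> \<in> I" by (rule ideal_diff[OF I ideal_mult2[OF I deI bR] ideal_mult2[OF I eI dbR]])
    finally show "valid m I (dder \<delta> i a * b - a * dder \<delta> i b) (b * b) \<and>
     fclass (dring m) I (dder \<delta> i a * b - a * dder \<delta> i b) (b * b) = fclass (dring m) I (Var (vshift i v)) 1"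
      using fclass_eq[OF I vN vw] vN by blast
  qed
  have "(Var v, 1) \<in> fclass (dring m) I (Var v) 1" using fclass_refl[OF I] vR nzd_one by blast
  then show "fclass (dring m) I (Var (vshift i v)) 1 \<in> {fclass (dring m) I (dder \<delta> i a * b - a * dder \<delta> i b) (b * b) |a b.
          (a, b) \<in> fclass (dring m) I (Var v) 1}"
    using key by blast
  fix Y assume "Y \<in> {fclass (dring m) I (dder \<delta> i a * b - a * dder \<delta> i b) (b * b) |a b.
          (a, b) \<in> fclass (dring m) I (Var v) 1}"
  then show "Y = fclass (dring m) I (Var (vshift i v)) 1" using key by blast
qed

lemma qder_sub:
  assumes "(A, B) \<in> Y"
  shows "fclass (dring m) J (dder \<delta> i A * B - A * dder \<delta> i B) (B * B) \<subseteq> qder m \<delta> i J Y"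
  unfolding qder_def using assms by blast




lemma keys_add_single: "a \<notin> Poly_Mapping.keys f \<Longrightarrow> b \<noteq> 0 \<Longrightarrow> Poly_Mapping.keys (f + Poly_Mapping.single a b) = insert a (Poly_Mapping.keys f)"
  by (auto simp: in_keys_iff lookup_add lookup_single when_def split: if_splits)

lemma pvars_add_single: "a \<notin> Poly_Mapping.keys f \<Longrightarrow> b \<noteq> 0 \<Longrightarrow> pvars (f + Poly_Mapping.single a b) = Poly_Mapping.keys a \<union> pvars f"
  unfolding pvars_def by (simp add: keys_add_single)

lemma pvars_single_nz: "b \<noteq> 0 \<Longrightarrow> pvars (Poly_Mapping.single a b) = Poly_Mapping.keys a"
  unfolding pvars_def by simp

lemma single_pow: "Poly_Mapping.single (Poly_Mapping.single v n) (1::'f::comm_ring_1) = (Var v :: ('f,'u) dpoly) ^ n"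
proof (induction n)
  case 0 then show ?case by simp
next
  case (Suc n)
  have "Poly_Mapping.single (Poly_Mapping.single v (Suc n)) (1::'f) = Var v * Poly_Mapping.single (Poly_Mapping.single v n) 1"
    unfolding Var_def by (simp add: mult_single single_add[symmetric])
  then show ?case using Suc by simp
qed

lemma Const_one: "Const 1 = 1"
  unfolding Const_def by simp

lemma dring_le_mult: "a \<in> dring_le m l \<Longrightarrow> b \<in> dring_le m l \<Longrightarrow> (a::('f::comm_ring_1,'u) dpoly) * b \<in> dring_le m l"
  unfolding dring_le_cset by (rule cset_mult)
lemma dring_le_add: "a \<in> dring_le m l \<Longrightarrow> b \<in> dring_le m l \<Longrightarrow> a + b \<in> dring_le m l"
  unfolding dring_le_cset by (rule cset_add)
lemma dring_le_diff: "a \<in> dring_le m l \<Longrightarrow> b \<in> dring_le m l \<Longrightarrow> a - b \<in> dring_le m l"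
  unfolding dring_le_cset by (rule cset_diff)
lemma dring_le_one: "(1::('f::comm_ring_1,'u) dpoly) \<in> dring_le m l"
  unfolding dring_le_def by simp
lemma dring_le_Const: "Const c \<in> dring_le m l"
  unfolding dring_le_def by simp

context
  fixes m :: nat and \<delta> :: "nat \<Rightarrow> 'f::field_char_0 \<Rightarrow> 'f"
    and I :: "('f, 'u::finite) dpoly set"
    and J :: "('f, 'v::finite) dpoly set"
    and \<phi> :: "(('f, 'u) dpoly \<times> ('f, 'u) dpoly) set \<Rightarrow> (('f, 'v) dpoly \<times> ('f, 'v) dpoly) set"
  assumes Fd: "diff_field m \<delta>" and I: "is_ideal (dring m) I" and ID: "\<forall>i<m. \<forall>p\<in>I. dder \<delta> i p \<in> I"
    and J: "is_ideal (dring m) J" and Bir: "diff_birational m \<delta> I J \<phi>"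
begin

definition good :: "nat \<Rightarrow> (('f, 'v) dpoly \<times> ('f, 'v) dpoly) set \<Rightarrow> bool" where
  "good k Y \<longleftrightarrow> (\<exists>A B. A \<in> dring_le m k \<and> B \<in> dring_le m k \<and> nzd_mod (dring m) J B \<and> Y = fclass (dring m) J A B)"

lemma good_dquot_le: "good k Y \<Longrightarrow> Y \<in> dquot_le m J k"
proof -
  assume "good k Y"
  then obtain A B where h: "A \<in> dring_le m k" "B \<in> dring_le m k" "nzd_mod (dring m) J B" "Y = fclass (dring m) J A B"
    unfolding good_def by blast
  have "nzd_mod (dring_le m k) (J \<inter> dring_le m k) B"
    using h(2,3) dring_le_dring unfolding nzd_mod_def by blast
  then show ?thesis unfolding dquot_le_def using h by blast
qed

lemma good_mono: "k \<le> k' \<Longrightarrow> good k Y \<Longrightarrow> good k' Y"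
  unfolding good_def using dring_le_mono by blast

lemma good_valid: "good k Y \<Longrightarrow> \<exists>A B. A \<in> dring_le m k \<and> B \<in> dring_le m k \<and> valid m J A B \<and> Y = fclass (dring m) J A B"
  unfolding good_def using dring_le_dring by blast

lemma good_mul: "good k Y \<Longrightarrow> good k Y' \<Longrightarrow> good k (qmul (dring m) J Y Y')"
proof -
  assume "good k Y" "good k Y'"
  then obtain A B A' B' where h: "A \<in> dring_le m k" "B \<in> dring_le m k" "valid m J A B" "Y = fclass (dring m) J A B"
    "A' \<in> dring_le m k" "B' \<in> dring_le m k" "valid m J A' B'" "Y' = fclass (dring m) J A' B'"
    using good_valid by metis
  show ?thesis unfolding good_def h(4,8) qmul_fclass[OF J h(3) h(7)]
    using h by (intro exI[of _ "A * A'"] exI[of _ "B * B'"]) (auto intro: dring_le_mult nzd_mult)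
qed

lemma good_add: "good k Y \<Longrightarrow> good k Y' \<Longrightarrow> good k (qadd (dring m) J Y Y')"
proof -
  assume "good k Y" "good k Y'"
  then obtain A B A' B' where h: "A \<in> dring_le m k" "B \<in> dring_le m k" "valid m J A B" "Y = fclass (dring m) J A B"
    "A' \<in> dring_le m k" "B' \<in> dring_le m k" "valid m J A' B'" "Y' = fclass (dring m) J A' B'"
    using good_valid by metis
  show ?thesis unfolding good_def h(4,8) qadd_fclass[OF J h(3) h(7)]
    using h by (intro exI[of _ "A * B' + A' * B"] exI[of _ "B * B'"]) (auto intro: dring_le_mult dring_le_add nzd_mult)
qed

lemma phi_in: "X \<in> dquot m I \<Longrightarrow> \<phi> X \<in> dquot m J"
  using Bir unfolding diff_birational_def bij_betw_def by blast

lemma phi_mul: "X \<in> dquot m I \<Longrightarrow> Y \<in> dquot m I \<Longrightarrow> \<phi> (qmul (dring m) I X Y) = qmul (dring m) J (\<phi> X) (\<phi> Y)"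
  using Bir unfolding diff_birational_def by blast

lemma phi_add: "X \<in> dquot m I \<Longrightarrow> Y \<in> dquot m I \<Longrightarrow> \<phi> (qadd (dring m) I X Y) = qadd (dring m) J (\<phi> X) (\<phi> Y)"
  using Bir unfolding diff_birational_def by blast

lemma phi_const: "\<phi> (fclass (dring m) I (Const c) 1) = fclass (dring m) J (Const c) 1"
  using Bir unfolding diff_birational_def by blast

lemma phi_der: "i < m \<Longrightarrow> X \<in> dquot m I \<Longrightarrow> \<phi> (qder m \<delta> i I X) = qder m \<delta> i J (\<phi> X)"
  using Bir unfolding diff_birational_def by blast

lemma phi_one: "\<phi> (fclass (dring m) I 1 1) = fclass (dring m) J 1 1"
  using phi_const[of 1] by (simp add: Const_one)

lemma cI_in: "p \<in> dring m \<Longrightarrow> fclass (dring m) I p 1 \<in> dquot m I"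
  using dquot_fclass nzd_one by blast

lemma cI_mul: "p \<in> dring m \<Longrightarrow> q \<in> dring m \<Longrightarrow> fclass (dring m) I (p * q) 1 = qmul (dring m) I (fclass (dring m) I p 1) (fclass (dring m) I q 1)"
proof -
  assume "p \<in> dring m" "q \<in> dring m"
  then show ?thesis using qmul_fclass[OF I, of p 1 q 1] nzd_one[of m I] by simp
qed

lemma cI_add: "p \<in> dring m \<Longrightarrow> q \<in> dring m \<Longrightarrow> fclass (dring m) I (p + q) 1 = qadd (dring m) I (fclass (dring m) I p 1) (fclass (dring m) I q 1)"
proof -
  assume "p \<in> dring m" "q \<in> dring m"
  then show ?thesis using qadd_fclass[OF I, of p 1 q 1] nzd_one[of m I] by simp
qed


lemma Var_dring: "v \<in> dvars m \<Longrightarrow> (Var v :: ('f,'w) dpoly) \<in> dring m"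
  unfolding dring_def by simp

lemma base_bound: "\<exists>l0. \<forall>u. good l0 (\<phi> (fclass (dring m) I (Var (u, replicate m 0)) 1))"
proof -
  have "\<forall>u. \<exists>A B. valid m J A B \<and> \<phi> (fclass (dring m) I (Var (u, replicate m 0)) 1) = fclass (dring m) J A B"
  proof
    fix u :: 'u
    have "(u, replicate m 0) \<in> dvars m" unfolding dvars_def by simp
    then show "\<exists>A B. valid m J A B \<and> \<phi> (fclass (dring m) I (Var (u, replicate m 0)) 1) = fclass (dring m) J A B"
      using dquot_E phi_in cI_in Var_dring by blast
  qed
  then obtain A B where AB: "\<And>u. valid m J (A u) (B u)"
    "\<And>u. \<phi> (fclass (dring m) I (Var (u, replicate m 0)) 1) = fclass (dring m) J (A u) (B u)"
    by metis
  define l0 where "l0 = Max (insert 0 (vord ` (\<Union>u. pvars (A u) \<union> pvars (B u))))"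
  have fin: "finite (insert 0 (vord ` (\<Union>u. pvars (A u) \<union> pvars (B u))))"
    by (simp add: finite_pvars)
  have bnd: "\<And>u w. w \<in> pvars (A u) \<union> pvars (B u) \<Longrightarrow> vord w \<le> l0"
    unfolding l0_def using fin by (intro Max_ge) auto
  have "\<forall>u. good l0 (\<phi> (fclass (dring m) I (Var (u, replicate m 0)) 1))"
  proof
    fix u
    have "A u \<in> dring_le m l0" "B u \<in> dring_le m l0"
      using AB(1)[of u] nzd_dring bnd[of _ u] unfolding dring_le_def dring_def by blast+
    then show "good l0 (\<phi> (fclass (dring m) I (Var (u, replicate m 0)) 1))"
      unfolding good_def using AB[of u] by blast
  qed
  then show ?thesis by blast
qed

lemma sum_list_zero_replicate: "sum_list (xs::nat list) = 0 \<Longrightarrow> xs = replicate (length xs) 0"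
  by (induction xs) auto

lemma var_good: "\<exists>l0. \<forall>v\<in>dvars m. good (vord v + l0) (\<phi> (fclass (dring m) I (Var v) 1))"
proof -
  obtain l0 where l0: "\<And>u. good l0 (\<phi> (fclass (dring m) I (Var (u, replicate m 0)) 1))"
    using base_bound by blast
  have "\<forall>v\<in>dvars m. vord v = n \<longrightarrow> good (n + l0) (\<phi> (fclass (dring m) I (Var v) 1))" for n
  proof (induction n)
    case 0
    show ?case
    proof (intro ballI impI)
      fix v :: "'u dvar" assume v: "v \<in> dvars m" "vord v = 0"
      have "snd v = replicate m 0" using sum_list_zero_replicate[of "snd v"] v unfolding vord_def dvars_def by simp
      then have "v = (fst v, replicate m 0)" by (metis prod.collapse)
      then show "good (0 + l0) (\<phi> (fclass (dring m) I (Var v) 1))" using l0[of "fst v"] by simp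
    qed
  next
    case (Suc n)
    show ?case
    proof (intro ballI impI)
      fix v :: "'u dvar" assume v: "v \<in> dvars m" "vord v = Suc n"
      have len: "length (snd v) = m" using v unfolding dvars_def by simp
      have "sum_list (snd v) \<noteq> 0" using v unfolding vord_def by simp
      then have "\<exists>x\<in>set (snd v). x \<noteq> 0" by (simp add: sum_list_eq_0_iff)
      then obtain x where "x \<in> set (snd v)" "x \<noteq> 0" by blast
      then obtain i where i: "i < m" "snd v ! i \<noteq> 0" using len by (metis in_set_conv_nth)
      define v' where "v' = (fst v, (snd v)[i := snd v ! i - 1])"
      have v'd: "v' \<in> dvars m" unfolding v'_def dvars_def using len by simp
      have vsh: "vshift i v' = v" unfolding v'_def vshift_def using i len by simp
      have "vord v = vord v' + 1" using vord_vshift[OF i(1) v'd] vsh by simp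
      then have ov': "vord v' = n" using v by simp
      have der: "der (\<delta> i)" by (rule diff_field_der[OF Fd i(1)])
      have g: "good (n + l0) (\<phi> (fclass (dring m) I (Var v') 1))" using Suc v'd ov' by blast
      then obtain A B where AB: "A \<in> dring_le m (n + l0)" "B \<in> dring_le m (n + l0)" "valid m J A B"
        "\<phi> (fclass (dring m) I (Var v') 1) = fclass (dring m) J A B" using good_valid by blast
      have X: "fclass (dring m) I (Var v) 1 = qder m \<delta> i I (fclass (dring m) I (Var v') 1)"
        using qder_Var[OF Fd I ID i(1) v'd] vsh by simp
      have Xin: "fclass (dring m) I (Var v') 1 \<in> dquot m I" using cI_in Var_dring[OF v'd] .
      have E: "\<phi> (fclass (dring m) I (Var v) 1) = qder m \<delta> i J (fclass (dring m) J A B)"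
        unfolding X phi_der[OF i(1) Xin] AB(4) ..
      have "\<phi> (fclass (dring m) I (Var v) 1) \<in> dquot m J" using phi_in cI_in Var_dring[OF v(1)] by blast
      then obtain c d where cd: "valid m J c d" "\<phi> (fclass (dring m) I (Var v) 1) = fclass (dring m) J c d"
        using dquot_E by blast
      define N where "N = dder \<delta> i A * B - A * dder \<delta> i B"
      have sub: "dring_le m (n + l0) \<subseteq> dring_le m (Suc n + l0)" by (rule dring_le_mono) simp
      have A1: "A \<in> dring_le m (Suc n + l0)" using AB(1) sub by blast
      have B1: "B \<in> dring_le m (Suc n + l0)" using AB(2) sub by blast
      have dA: "dder \<delta> i A \<in> dring_le m (Suc n + l0)" using dder_dring_le[of \<delta> i m A, OF der i(1) AB(1)] by simp
      have dB: "dder \<delta> i B \<in> dring_le m (Suc n + l0)" using dder_dring_le[of \<delta> i m B, OF der i(1) AB(2)] by simp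
      have Nle: "N \<in> dring_le m (Suc n + l0)" unfolding N_def
        by (rule dring_le_diff[OF dring_le_mult[OF dA B1] dring_le_mult[OF A1 dB]])
      have BBle: "B * B \<in> dring_le m (Suc n + l0)" by (rule dring_le_mult[OF B1 B1])
      have NR: "N \<in> dring m" using Nle dring_le_dring by blast
      have nBB: "nzd_mod (dring m) J (B * B)" using AB(3) nzd_mult by blast
      have vN: "valid m J N (B * B)" using NR nBB by blast
      have "(A, B) \<in> fclass (dring m) J A B" by (rule fclass_refl[OF J AB(3)])
      then have "fclass (dring m) J N (B * B) \<subseteq> fclass (dring m) J c d"
        using qder_sub[of A B "fclass (dring m) J A B" m J \<delta> i] E cd(2) unfolding N_def by simp
      then have "(N, B * B) \<in> fclass (dring m) J c d" using fclass_refl[OF J vN] by blast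
      then have "fclass (dring m) J N (B * B) = fclass (dring m) J c d" by (rule fclass_mem_eq[OF J cd(1)])
      then show "good (Suc n + l0) (\<phi> (fclass (dring m) I (Var v) 1))"
        unfolding good_def using Nle BBle nBB cd(2) \<open>fclass (dring m) J N (B * B) = fclass (dring m) J c d\<close> by auto
    qed
  qed
  then show ?thesis by blast
qed


lemma good_fclass: "A \<in> dring_le m k \<Longrightarrow> B \<in> dring_le m k \<Longrightarrow> nzd_mod (dring m) J B \<Longrightarrow> good k (fclass (dring m) J A B)"
  unfolding good_def by blast

lemma good_const: "good k (\<phi> (fclass (dring m) I (Const c) 1))"
  unfolding phi_const by (rule good_fclass[OF dring_le_Const dring_le_one nzd_one])

lemma var_pow_good:
  assumes l0: "\<forall>v\<in>dvars m. good (vord v + l0) (\<phi> (fclass (dring m) I (Var v) 1))"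
    and v: "v \<in> dvars m" "vord v \<le> l"
  shows "good (l + l0) (\<phi> (fclass (dring m) I (Var v ^ n) 1))"
proof (induction n)
  case 0
  show ?case using good_const[of "l + l0" 1] by (simp add: Const_one)
next
  case (Suc n)
  have VR: "(Var v :: ('f,'u) dpoly) \<in> dring m" by (rule Var_dring[OF v(1)])
  have VnR: "(Var v :: ('f,'u) dpoly) ^ n \<in> dring m" using VR unfolding dring_cset by (rule cset_power)
  have gv: "good (l + l0) (\<phi> (fclass (dring m) I (Var v) 1))"
    using good_mono[of "vord v + l0" "l + l0"] l0 v by simp
  have "\<phi> (fclass (dring m) I (Var v ^ Suc n) 1)
      = qmul (dring m) J (\<phi> (fclass (dring m) I (Var v) 1)) (\<phi> (fclass (dring m) I (Var v ^ n) 1))"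
    using cI_mul[OF VR VnR] phi_mul[OF cI_in[OF VR] cI_in[OF VnR]] by simp
  then show ?case using good_mul[OF gv Suc.IH] by simp
qed

lemma single_dring: "Poly_Mapping.single a b \<in> dring_le m l \<Longrightarrow> Poly_Mapping.single a b \<in> dring m"
  using dring_le_dring by blast

lemma mono_good:
  assumes l0: "\<forall>v\<in>dvars m. good (vord v + l0) (\<phi> (fclass (dring m) I (Var v) 1))"
  shows "\<forall>b. (Poly_Mapping.single a b :: ('f,'u) dpoly) \<in> dring_le m l \<longrightarrow> good (l + l0) (\<phi> (fclass (dring m) I (Poly_Mapping.single a b) 1))"
proof (induction a rule: pm_induct_keys)
  case zero
  show ?case using good_const unfolding Const_def by blast
next
  case (add f x n)
  show ?case
  proof (intro allI impI)
    fix b :: 'f assume h: "Poly_Mapping.single (f + Poly_Mapping.single x n) b \<in> dring_le m l"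
    show "good (l + l0) (\<phi> (fclass (dring m) I (Poly_Mapping.single (f + Poly_Mapping.single x n) b) 1))"
    proof (cases "b = 0")
      case True
      then show ?thesis using good_const[of "l + l0" 0] by (simp add: Const_def)
    next
      case False
      have pv: "pvars (Poly_Mapping.single (f + Poly_Mapping.single x n) b :: ('f,'u) dpoly) = insert x (Poly_Mapping.keys f)"
        unfolding pvars_single_nz[OF False] by (rule keys_add_single[OF add(1,2)])
      have xx: "x \<in> dvars m" "vord x \<le> l" using h pv unfolding dring_le_def by auto
      have sf: "(Poly_Mapping.single f b :: ('f,'u) dpoly) \<in> dring_le m l"
        using h pv pvars_single_nz[OF False, of f] unfolding dring_le_def by auto
      have eq: "(Poly_Mapping.single (f + Poly_Mapping.single x n) b :: ('f,'u) dpoly) = Poly_Mapping.single f b * Var x ^ n"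
        unfolding single_pow[symmetric] by (simp add: mult_single)
      have sfR: "(Poly_Mapping.single f b :: ('f,'u) dpoly) \<in> dring m" using sf dring_le_dring by blast
      have VR: "(Var x :: ('f,'u) dpoly) \<in> dring m" by (rule Var_dring[OF xx(1)])
      have VnR: "(Var x :: ('f,'u) dpoly) ^ n \<in> dring m" using VR unfolding dring_cset by (rule cset_power)
      have "\<phi> (fclass (dring m) I (Poly_Mapping.single (f + Poly_Mapping.single x n) b) 1)
        = qmul (dring m) J (\<phi> (fclass (dring m) I (Poly_Mapping.single f b) 1)) (\<phi> (fclass (dring m) I (Var x ^ n) 1))"
        unfolding eq using cI_mul[OF sfR VnR] phi_mul[OF cI_in[OF sfR] cI_in[OF VnR]] by simp
      then show ?thesis using good_mul add(3) sf var_pow_good[OF l0 xx] by simp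
    qed
  qed
qed

lemma poly_good:
  assumes l0: "\<forall>v\<in>dvars m. good (vord v + l0) (\<phi> (fclass (dring m) I (Var v) 1))"
  shows "p \<in> dring_le m l \<longrightarrow> good (l + l0) (\<phi> (fclass (dring m) I p 1))"
proof (induction p rule: pm_induct_keys)
  case zero
  show ?case using good_const[of "l + l0" 0] by (simp add: Const_def)
next
  case (add f a b)
  show ?case
  proof
    assume h: "f + Poly_Mapping.single a b \<in> dring_le m l"
    have pv: "pvars (f + Poly_Mapping.single a b) = Poly_Mapping.keys a \<union> pvars f"
      by (rule pvars_add_single[OF add(1,2)])
    have fl: "f \<in> dring_le m l" using h pv unfolding dring_le_def by auto
    have sl: "Poly_Mapping.single a b \<in> dring_le m l" using h pv pvars_single_nz[OF add(2), of a] unfolding dring_le_def by auto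
    have fR: "f \<in> dring m" and sR: "Poly_Mapping.single a b \<in> dring m" using fl sl dring_le_dring by blast+
    have "\<phi> (fclass (dring m) I (f + Poly_Mapping.single a b) 1)
      = qadd (dring m) J (\<phi> (fclass (dring m) I f 1)) (\<phi> (fclass (dring m) I (Poly_Mapping.single a b) 1))"
      using cI_add[OF fR sR] phi_add[OF cI_in[OF fR] cI_in[OF sR]] by simp
    then show "good (l + l0) (\<phi> (fclass (dring m) I (f + Poly_Mapping.single a b) 1))"
      using good_add add(3) fl mono_good[OF l0, of a l] sl by simp
  qed
qed


lemma final_good:
  assumes l0: "\<forall>v\<in>dvars m. good (vord v + l0) (\<phi> (fclass (dring m) I (Var v) 1))"
    and X: "X \<in> dquot_le m I l"
  shows "good (l + l0) (\<phi> X)"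
proof -
  obtain a b where ab: "X = fclass (dring m) I a b" "a \<in> dring_le m l"
    "nzd_mod (dring_le m l) (I \<inter> dring_le m l) b" "nzd_mod (dring m) I b"
    using X unfolding dquot_le_def by blast
  have bl: "b \<in> dring_le m l" using ab(3) unfolding nzd_mod_def by blast
  have aR: "a \<in> dring m" and bR: "b \<in> dring m" using ab(2) bl dring_le_dring by blast+
  have va: "valid m I a b" using aR ab(4) by blast
  have va1: "valid m I a 1" and vb1: "valid m I b 1" and v1b: "valid m I 1 b" and v11: "valid m I 1 1"
    using aR bR ab(4) nzd_one[of m I] by auto
  have "good (l + l0) (\<phi> (fclass (dring m) I a 1))" using poly_good[OF l0] ab(2) by blast
  then obtain A B2 where A: "A \<in> dring_le m (l + l0)" "B2 \<in> dring_le m (l + l0)" "valid m J A B2"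
    "\<phi> (fclass (dring m) I a 1) = fclass (dring m) J A B2" using good_valid by blast
  have "good (l + l0) (\<phi> (fclass (dring m) I b 1))" using poly_good[OF l0] bl by blast
  then obtain P Q where P: "P \<in> dring_le m (l + l0)" "Q \<in> dring_le m (l + l0)" "valid m J P Q"
    "\<phi> (fclass (dring m) I b 1) = fclass (dring m) J P Q" using good_valid by blast
  have Xin: "X \<in> dquot m I" unfolding ab(1) by (rule dquot_fclass[OF va])
  obtain c d where cd: "valid m J c d" "\<phi> X = fclass (dring m) J c d" using dquot_E[OF phi_in[OF Xin]] by blast
  have vab: "valid m I (a * b) (b * 1)" using aR bR ab(4) by (auto intro: dring_mult)
  have "fclass (dring m) I a 1 = fclass (dring m) I (a * b) (b * 1)"
    by (rule fclass_eq[OF I va1 vab]) (simp add: ideal_zero[OF I])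
  also have "\<dots> = qmul (dring m) I X (fclass (dring m) I b 1)" unfolding ab(1) by (rule qmul_fclass[OF I va vb1, symmetric])
  finally have e1: "fclass (dring m) I a 1 = qmul (dring m) I X (fclass (dring m) I b 1)" .
  have "fclass (dring m) J A B2 = qmul (dring m) J (\<phi> X) (\<phi> (fclass (dring m) I b 1))"
    using A(4) e1 phi_mul[OF Xin cI_in[OF bR]] by simp
  also have "\<dots> = fclass (dring m) J (c * P) (d * Q)" unfolding cd(2) P(4) by (rule qmul_fclass[OF J cd(1) P(3)])
  finally have e2: "fclass (dring m) J A B2 = fclass (dring m) J (c * P) (d * Q)" .
  have vcp: "valid m J (c * P) (d * Q)" using cd(1) P(3) by (auto intro: dring_mult nzd_mult)
  have "(c * P, d * Q) \<in> fclass (dring m) J A B2" unfolding e2 by (rule fclass_refl[OF J vcp])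
  then have rel1: "A * (d * Q) - c * P * B2 \<in> J" by (simp add: mem_fclass)
  have "fclass (dring m) I 1 1 = fclass (dring m) I (b * 1) (1 * b)"
    by (rule fclass_eq[OF I v11]) (use bR ab(4) nzd_one[of m I] in \<open>auto simp: ideal_zero[OF I]\<close>)
  also have "\<dots> = qmul (dring m) I (fclass (dring m) I b 1) (fclass (dring m) I 1 b)" by (rule qmul_fclass[OF I vb1 v1b, symmetric])
  finally have e3: "fclass (dring m) I 1 1 = qmul (dring m) I (fclass (dring m) I b 1) (fclass (dring m) I 1 b)" .
  have inv_in: "fclass (dring m) I 1 b \<in> dquot m I" by (rule dquot_fclass[OF v1b])
  obtain e f where ef: "valid m J e f" "\<phi> (fclass (dring m) I 1 b) = fclass (dring m) J e f"
    using dquot_E[OF phi_in[OF inv_in]] by blast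
  have "fclass (dring m) J 1 1 = qmul (dring m) J (fclass (dring m) J P Q) (fclass (dring m) J e f)"
    using phi_one e3 phi_mul[OF cI_in[OF bR] inv_in] P(4) ef(2) by simp
  also have "\<dots> = fclass (dring m) J (P * e) (Q * f)" by (rule qmul_fclass[OF J P(3) ef(1)])
  finally have e4: "fclass (dring m) J 1 1 = fclass (dring m) J (P * e) (Q * f)" .
  have v11J: "valid m J 1 1" using nzd_one[of m J] by simp
  have "(1, 1) \<in> fclass (dring m) J (P * e) (Q * f)" unfolding e4[symmetric] by (rule fclass_refl[OF J v11J])
  then have rel2: "P * e * 1 - 1 * (Q * f) \<in> J" by (simp add: mem_fclass)
  have PR: "P \<in> dring m" and QR: "Q \<in> dring m" and eR: "e \<in> dring m" and fR: "f \<in> dring m"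
    using P(3) ef(1) nzd_dring by blast+
  have nzP: "nzd_mod (dring m) J P"
    unfolding nzd_mod_def
  proof (intro conjI ballI impI)
    show "P \<in> dring m" by (rule PR)
    fix q assume q: "q \<in> dring m" "P * q \<in> J"
    have t1: "e * (P * q) \<in> J" by (rule ideal_mult[OF J q(2) eR])
    have t2: "(P * e * 1 - 1 * (Q * f)) * q \<in> J" by (rule ideal_mult2[OF J rel2 q(1)])
    have "Q * (f * q) = e * (P * q) - (P * e * 1 - 1 * (Q * f)) * q" by (simp add: algebra_simps)
    also have "\<dots> \<in> J" by (rule ideal_diff[OF J t1 t2])
    finally have "Q * (f * q) \<in> J" .
    then have "f * q \<in> J" using P(3) dring_mult[OF fR q(1)] unfolding nzd_mod_def by blast
    then show "q \<in> J" using ef(1) q(1) unfolding nzd_mod_def by blast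
  qed
  have vAQ: "valid m J (A * Q) (B2 * P)" using A(3) QR nzP by (auto intro: dring_mult nzd_mult)
  have "c * (B2 * P) - A * Q * d = 0 - (A * (d * Q) - c * P * B2)" by (simp add: algebra_simps)
  also have "\<dots> \<in> J" by (rule ideal_diff[OF J ideal_zero[OF J] rel1])
  finally have "fclass (dring m) J c d = fclass (dring m) J (A * Q) (B2 * P)" by (rule fclass_eq[OF J cd(1) vAQ])
  then have "\<phi> X = fclass (dring m) J (A * Q) (B2 * P)" using cd(2) by simp
  then show ?thesis unfolding good_def
    using dring_le_mult[OF A(1) P(2)] dring_le_mult[OF A(2) P(1)] vAQ by blast
qed

lemma main_in_context: "\<exists>l0::nat. \<forall>l::nat. \<phi> ` dquot_le m I l \<subseteq> dquot_le m J (l + l0)"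
proof -
  obtain l0 where l0: "\<forall>v\<in>dvars m. good (vord v + l0) (\<phi> (fclass (dring m) I (Var v) 1))"
    using var_good by blast
  have "\<forall>l. \<phi> ` dquot_le m I l \<subseteq> dquot_le m J (l + l0)"
    using final_good[OF l0] good_dquot_le by blast
  then show ?thesis by blast
qed

end

theorem mainTheorem5:
  fixes m :: nat
    and \<delta> :: "nat \<Rightarrow> 'f::field_char_0 \<Rightarrow> 'f"
    and I :: "('f, 'u::finite) dpoly set"
    and J :: "('f, 'v::finite) dpoly set"
    and \<phi> :: "(('f, 'u) dpoly \<times> ('f, 'u) dpoly) set \<Rightarrow> (('f, 'v) dpoly \<times> ('f, 'v) dpoly) set"
  assumes "diff_field m \<delta>"
    and "characterizable m \<delta> I"
    and "characterizable m \<delta> J"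
    and "diff_birational m \<delta> I J \<phi>"
  shows "\<exists>l0::nat. \<forall>l::nat. \<phi> ` dquot_le m I l \<subseteq> dquot_le m J (l + l0)"
  using main_in_context[OF assms(1) characterizable_ideal(1)[OF assms(1,2)] characterizable_ideal(2)[OF assms(1,2)]
      characterizable_ideal(1)[OF assms(1,3)] assms(4)] .



end
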